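(* Let $n\ge1$, $d\ge1$. Let $A_1,\dots,A_n:\mathbb{R}^d\rightrightarrows\mathbb{R}^d$ be maximal monotone and $B:\mathbb{R}^d\to\mathbb{R}^d$ monotone and $L$-Lipschitz ($L>0$), and assume $0\in\sum_{i=1}^nA_i(z)+B(z)$ has a solution. Fix a total number of iterations $K\ge1$ and a constant $C_f>0$, and run Algorithm SPS (described in the context) for $k=1,\dots,K$ with $\tau>0$, an initial point $p^1=(z^1,w_1^1,\dots,w_{n+1}^1)$ with $\sum_{i=1}^{n+1}w_i^1=0$, and constant stepsizes $$\rho_k=\rho:=\min\Big\{K^{-1/4},\frac{1}{2L}\Big\},\qquad \alpha_k=C_f\rho^2,\qquad k=1,\dots,K.$$ Suppose that almost surely for every $k$, $\mathbb{E}[\epsilon^k\mid\mathcal{F}_k]=0$, $\mathbb{E}[e^k\mid\mathcal{F}_k]=0$, $\mathbb{E}[\|\epsilon^k\|^2\mid\mathcal{F}_k]\le N_1+N_2\|B(z^k)\|^2$ and $\mathbb{E}[\|e^k\|^2\mid\mathcal{F}_k,\mathcal{E}_k]\le N_3+N_4\|B(x_{n+1}^k)\|^2$ for constants $0\le N_1,\dots,N_4<\infty$. Define $$O_k=\sum_{i=1}^n\|y_i^k-w_i^k\|^2+\sum_{i=1}^n\|z^k-x_i^k\|^2+\|B(z^k)-w_{n+1}^k\|^2.$$ Then $$\frac1K\sum_{j=1}^K\mathbb{E}[O_j]=O(K^{-1/4}),$$ where the constant hidden in $O(\cdot)$ does not depend on $K$ (it depends only on $n,\tau,L,N_1,\dots,N_4,C_f$,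 the initial point $p^1$, and the problem data).
   Context: For maximal monotone $A$ and $\tau>0$, $J_{\tau A}=(I+\tau A)^{-1}$ (single-valued, domain $\mathbb{R}^d$). Algorithm SPS: given $p^k=(z^k,w_1^k,\dots,w_{n+1}^k)$, for $i=1,\dots,n$ set $t_i^k=z^k+\tau w_i^k$, $x_i^k=J_{\tau A_i}(t_i^k)$, $y_i^k=\tau^{-1}(t_i^k-x_i^k)$; then $r^k=B(z^k)+\epsilon^k$, $x_{n+1}^k=z^k-\rho_k(r^k-w_{n+1}^k)$, $y_{n+1}^k=B(x_{n+1}^k)+e^k$, where $\epsilon^k,e^k$ are $\mathbb{R}^d$-valued random noise variables on a probability space; finally $z^{k+1}=z^k-\alpha_k\sum_{i=1}^{n+1}y_i^k$ and $w_i^{k+1}=w_i^k-\alpha_k(x_i^k-\frac1{n+1}\sum_{j=1}^{n+1}x_j^k)$, $i=1,\dots,n+1$. $\mathcal{F}_k=\sigma(p^1,\dots,p^k)$, $\mathcal{E}_k=\sigma(\epsilon^k)$. *)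

theory Defs
  imports "HOL-Probability.Probability"
begin

definition monotone_op :: "('a::real_inner \<Rightarrow> 'a set) \<Rightarrow> bool" where
  "monotone_op A \<longleftrightarrow> (\<forall>x y u v. u \<in> A x \<longrightarrow> v \<in> A y \<longrightarrow> 0 \<le> (u - v) \<bullet> (x - y))"

definition maximal_monotone :: "('a::real_inner \<Rightarrow> 'a set) \<Rightarrow> bool" where
  "maximal_monotone A \<longleftrightarrow> monotone_op A \<and>
     (\<forall>A'. monotone_op A' \<and> (\<forall>x. A x \<subseteq> A' x) \<longrightarrow> A' = A)"

definition monotone_fun :: "('a::real_inner \<Rightarrow> 'a) \<Rightarrow> bool" where
  "monotone_fun B \<longleftrightarrow> (\<forall>x y. 0 \<le> (B x - B y) \<bullet> (x - y))"

text \<open>Resolvent J_{tau A} = (I + tau A)^{-1}: the unique x with t in x + tau A x.\<close>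
definition resolvent :: "real \<Rightarrow> ('a::real_inner \<Rightarrow> 'a set) \<Rightarrow> 'a \<Rightarrow> 'a" where
  "resolvent \<tau> A t = (THE x. (1 / \<tau>) *\<^sub>R (t - x) \<in> A x)"

text \<open>One iteration of SPS. Indices i = 1..n are the operators A_i, index n+1 is B.
  Arguments: current z, w (w i for i = 1..n+1), noise values eps (= epsilon^k), ee (= e^k).\<close>

definition sps_x :: "nat \<Rightarrow> (nat \<Rightarrow> 'a \<Rightarrow> 'a set) \<Rightarrow> ('a \<Rightarrow> 'a) \<Rightarrow> real \<Rightarrow> real
    \<Rightarrow> 'a::real_inner \<Rightarrow> (nat \<Rightarrow> 'a) \<Rightarrow> 'a \<Rightarrow> nat \<Rightarrow> 'a" where
  "sps_x n A B \<tau> \<rho> z w eps i =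
     (if i \<le> n then resolvent \<tau> (A i) (z + \<tau> *\<^sub>R w i)
      else z - \<rho> *\<^sub>R ((B z + eps) - w (n + 1)))"

definition sps_y :: "nat \<Rightarrow> (nat \<Rightarrow> 'a \<Rightarrow> 'a set) \<Rightarrow> ('a \<Rightarrow> 'a) \<Rightarrow> real \<Rightarrow> real
    \<Rightarrow> 'a::real_inner \<Rightarrow> (nat \<Rightarrow> 'a) \<Rightarrow> 'a \<Rightarrow> 'a \<Rightarrow> nat \<Rightarrow> 'a" where
  "sps_y n A B \<tau> \<rho> z w eps ee i =
     (if i \<le> n then (1 / \<tau>) *\<^sub>R ((z + \<tau> *\<^sub>R w i) - sps_x n A B \<tau> \<rho> z w eps i)
      else B (sps_x n A B \<tau> \<rho> z w eps (n + 1)) + ee)"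

definition sps_step :: "nat \<Rightarrow> (nat \<Rightarrow> 'a \<Rightarrow> 'a set) \<Rightarrow> ('a \<Rightarrow> 'a) \<Rightarrow> real \<Rightarrow> real \<Rightarrow> real
    \<Rightarrow> 'a::real_inner \<Rightarrow> (nat \<Rightarrow> 'a) \<Rightarrow> 'a \<Rightarrow> 'a \<Rightarrow> 'a \<times> (nat \<Rightarrow> 'a)" where
  "sps_step n A B \<tau> \<rho> \<alpha> z w eps ee =
     (z - \<alpha> *\<^sub>R (\<Sum>i=1..n+1. sps_y n A B \<tau> \<rho> z w eps ee i),
      \<lambda>i. w i - \<alpha> *\<^sub>R (sps_x n A B \<tau> \<rho> z w eps i
              - (1 / real (n + 1)) *\<^sub>R (\<Sum>j=1..n+1. sps_x n A B \<tau> \<rho> z w eps j)))"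

text \<open>sps_aux j = p^{j+1}; the noise sequences are indexed from 1 as in the paper.\<close>
primrec sps_aux :: "nat \<Rightarrow> (nat \<Rightarrow> 'a \<Rightarrow> 'a set) \<Rightarrow> ('a \<Rightarrow> 'a) \<Rightarrow> real \<Rightarrow> real \<Rightarrow> real
    \<Rightarrow> 'a::real_inner \<Rightarrow> (nat \<Rightarrow> 'a) \<Rightarrow> (nat \<Rightarrow> 'a) \<Rightarrow> (nat \<Rightarrow> 'a) \<Rightarrow> nat \<Rightarrow> 'a \<times> (nat \<Rightarrow> 'a)" where
  "sps_aux n A B \<tau> \<rho> \<alpha> z1 w1 eps ee 0 = (z1, w1)"
| "sps_aux n A B \<tau> \<rho> \<alpha> z1 w1 eps ee (Suc j) =
     (case sps_aux n A B \<tau> \<rho> \<alpha> z1 w1 eps ee j of (z, w) \<Rightarrow>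
        sps_step n A B \<tau> \<rho> \<alpha> z w (eps (Suc j)) (ee (Suc j)))"

definition sps_state where
  "sps_state n A B \<tau> \<rho> \<alpha> z1 w1 eps ee k = sps_aux n A B \<tau> \<rho> \<alpha> z1 w1 eps ee (k - 1)"

definition sps_z where
  "sps_z n A B \<tau> \<rho> \<alpha> z1 w1 \<epsilon> e k = (\<lambda>\<omega>. fst (sps_state n A B \<tau> \<rho> \<alpha> z1 w1 (\<lambda>j. \<epsilon> j \<omega>) (\<lambda>j. e j \<omega>) k))"

definition sps_w where
  "sps_w n A B \<tau> \<rho> \<alpha> z1 w1 \<epsilon> e k = (\<lambda>\<omega>. snd (sps_state n A B \<tau> \<rho> \<alpha> z1 w1 (\<lambda>j. \<epsilon> j \<omega>) (\<lambda>j. e j \<omega>) k))"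

definition sigma_gen :: "'m measure \<Rightarrow> ('m \<Rightarrow> 'a::topological_space) set \<Rightarrow> 'm measure" where
  "sigma_gen M Fs = sigma (space M) {f -` U \<inter> space M | f U. f \<in> Fs \<and> open U}"

definition sps_F where
  "sps_F M n A B \<tau> \<rho> \<alpha> z1 w1 \<epsilon> e k = sigma_gen M
     ({sps_z n A B \<tau> \<rho> \<alpha> z1 w1 \<epsilon> e j | j. 1 \<le> j \<and> j \<le> k} \<union>
      {(\<lambda>\<omega>. sps_w n A B \<tau> \<rho> \<alpha> z1 w1 \<epsilon> e j \<omega> i) | j i. 1 \<le> j \<and> j \<le> k \<and> 1 \<le> i \<and> i \<le> n + 1})"

definition sps_FE where
  "sps_FE M n A B \<tau> \<rho> \<alpha> z1 w1 \<epsilon> e k = sigma_gen M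
     ({sps_z n A B \<tau> \<rho> \<alpha> z1 w1 \<epsilon> e j | j. 1 \<le> j \<and> j \<le> k} \<union>
      {(\<lambda>\<omega>. sps_w n A B \<tau> \<rho> \<alpha> z1 w1 \<epsilon> e j \<omega> i) | j i. 1 \<le> j \<and> j \<le> k \<and> 1 \<le> i \<and> i \<le> n + 1}
      \<union> {\<epsilon> k})"

definition sps_O where
  "sps_O n A B \<tau> \<rho> \<alpha> z1 w1 \<epsilon> e k = (\<lambda>\<omega>.
     let z = sps_z n A B \<tau> \<rho> \<alpha> z1 w1 \<epsilon> e k \<omega>; w = sps_w n A B \<tau> \<rho> \<alpha> z1 w1 \<epsilon> e k \<omega> in
     (\<Sum>i=1..n. (norm (sps_y n A B \<tau> \<rho> z w (\<epsilon> k \<omega>) (e k \<omega>) i - w i))\<^sup>2)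
     + (\<Sum>i=1..n. (norm (z - sps_x n A B \<tau> \<rho> z w (\<epsilon> k \<omega>) i))\<^sup>2)
     + (norm (B z - w (n + 1)))\<^sup>2)"

end

theory Submission
  imports Defs
begin

lemma monotone_opD:
  assumes "monotone_op A" "u \<in> A x" "v \<in> A y"
  shows "0 \<le> (u - v) \<bullet> (x - y)"
  using assms unfolding monotone_op_def by blast

lemma double_sum_mono_nonneg:
  fixes a b :: "'k \<Rightarrow> 'a::real_inner" and l :: "'k \<Rightarrow> real"
  assumes fin: "finite S"
    and mono: "\<And>s r. s \<in> S \<Longrightarrow> r \<in> S \<Longrightarrow> 0 \<le> (b s - b r) \<bullet> (a s - a r)"
    and lpos: "\<And>s. s \<in> S \<Longrightarrow> 0 \<le> l s"
  shows "0 \<le> (\<Sum>s\<in>S. \<Sum>r\<in>S. l s * l r * (b s \<bullet> (a s - a r)))"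
proof -
  define Q where "Q = (\<Sum>s\<in>S. \<Sum>r\<in>S. l s * l r * (b s \<bullet> (a s - a r)))"
  have Q2: "Q = (\<Sum>s\<in>S. \<Sum>r\<in>S. l s * l r * (b r \<bullet> (a r - a s)))"
    unfolding Q_def by (subst sum.swap) (simp add: mult.commute)
  have "2 * Q = (\<Sum>s\<in>S. \<Sum>r\<in>S. l s * l r * (b s \<bullet> (a s - a r)) + l s * l r * (b r \<bullet> (a r - a s)))"
    using Q2 unfolding Q_def by (simp add: sum.distrib)
  also have "\<dots> = (\<Sum>s\<in>S. \<Sum>r\<in>S. l s * l r * ((b s - b r) \<bullet> (a s - a r)))"
    by (intro sum.cong refl) (simp add: inner_diff_left inner_diff_right algebra_simps)
  also have "\<dots> \<ge> 0"
    by (intro sum_nonneg mult_nonneg_nonneg mono lpos) auto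
  finally show ?thesis unfolding Q_def by simp
qed

lemma minty_finite:
  fixes S :: "('a::euclidean_space \<times> 'a) set" and t :: 'a
  assumes fin: "finite S" and tau: "0 < \<tau>"
    and mono: "\<And>a b c d. (a,b) \<in> S \<Longrightarrow> (c,d) \<in> S \<Longrightarrow> 0 \<le> (b - d) \<bullet> (a - c)"
  shows "\<exists>x. \<forall>(a,b)\<in>S. 0 \<le> (\<tau> *\<^sub>R b - t + x) \<bullet> (a - x)"
proof (rule ccontr)
  assume nex: "\<not> ?thesis"
  then have Sne: "S \<noteq> {}" by auto
  define g where "g = (\<lambda>s x. (\<tau> *\<^sub>R snd s - t + x) \<bullet> (fst s - x))"
  define h where "h = (\<lambda>s x. max 0 (- g s x))"
  define D where "D = (\<lambda>x. \<Sum>s\<in>S. h s x)"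
  have hnn: "\<And>s x. 0 \<le> h s x" unfolding h_def by simp
  have exneg: "\<exists>s\<in>S. g s x < 0" for x
  proof -
    from nex have "\<not> (\<forall>(a,b)\<in>S. 0 \<le> (\<tau> *\<^sub>R b - t + x) \<bullet> (a - x))" by blast
    then obtain a b where "(a,b) \<in> S" "\<not> 0 \<le> (\<tau> *\<^sub>R b - t + x) \<bullet> (a - x)" by blast
    then show ?thesis unfolding g_def by (intro bexI[of _ "(a,b)"]) auto
  qed
  have Dpos: "0 < D x" for x
  proof -
    from exneg[of x] obtain s where s: "s \<in> S" "g s x < 0" by blast
    have "0 < h s x" using s unfolding h_def by simp
    also have "h s x \<le> D x" unfolding D_def using fin s hnn by (intro member_le_sum) auto
    finally show ?thesis .
  qed
  define f where "f = (\<lambda>x. (1 / D x) *\<^sub>R (\<Sum>s\<in>S. h s x *\<^sub>R fst s))"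
  define C where "C = convex hull (fst ` S)"
  have Ccomp: "compact C" unfolding C_def using fin by (simp add: finite_imp_compact_convex_hull)
  have Cconv: "convex C" unfolding C_def by simp
  have Cne: "C \<noteq> {}" unfolding C_def using Sne by simp
  have contg: "continuous_on UNIV (g s)" for s unfolding g_def
    by (intro continuous_intros)
  have conth: "continuous_on UNIV (h s)" for s unfolding h_def
    using contg[of s] by (intro continuous_intros) auto
  have contD: "continuous_on UNIV D" unfolding D_def
    using conth by (intro continuous_on_sum) auto
  have contf: "continuous_on C f" unfolding f_def
    using conth contD Dpos
    by (intro continuous_intros continuous_on_subset[OF contD] continuous_on_subset[OF conth])
       (use Dpos in \<open>auto simp: less_le\<close>)
  have fim: "f \<in> C \<rightarrow> C"
  proof
    fix x assume "x \<in> C"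
    have "(\<Sum>s\<in>S. (h s x / D x) *\<^sub>R fst s) \<in> C"
    proof (rule convex_sum[OF fin Cconv])
      show "(\<Sum>s\<in>S. h s x / D x) = 1" using Dpos[of x]
        by (simp add: sum_divide_distrib[symmetric] D_def)
      show "\<And>s. s \<in> S \<Longrightarrow> 0 \<le> h s x / D x" using hnn Dpos[of x] by simp
      show "\<And>s. s \<in> S \<Longrightarrow> fst s \<in> C" unfolding C_def by (simp add: hull_inc)
    qed
    moreover have "f x = (\<Sum>s\<in>S. (h s x / D x) *\<^sub>R fst s)"
      unfolding f_def by (simp add: scaleR_sum_right divide_inverse_commute)
    ultimately show "f x \<in> C" by simp
  qed
  obtain x where "x \<in> C" and fx: "f x = x"
    using brouwer[OF Ccomp Cconv Cne contf fim] by blast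
  define l where "l = (\<lambda>s. h s x / D x)"
  have lnn: "\<And>s. 0 \<le> l s" unfolding l_def using hnn Dpos[of x] by simp
  have lsum: "(\<Sum>s\<in>S. l s) = 1" unfolding l_def using Dpos[of x]
    by (simp add: sum_divide_distrib[symmetric] D_def)
  have xeq: "x = (\<Sum>s\<in>S. l s *\<^sub>R fst s)"
    using fx unfolding f_def l_def by (simp add: scaleR_sum_right divide_inverse_commute)
  have hg: "h s x * g s x = - (h s x)\<^sup>2" for s
    unfolding h_def by (cases "g s x \<le> 0") (auto simp: power2_eq_square max_def)
  have "(\<Sum>s\<in>S. l s * g s x) = - (\<Sum>s\<in>S. (h s x)\<^sup>2) / D x"
    unfolding l_def by (simp add: hg sum_divide_distrib[symmetric] sum_negf)
  moreover have "0 < (\<Sum>s\<in>S. (h s x)\<^sup>2)"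
  proof -
    from exneg[of x] obtain s where s: "s \<in> S" "g s x < 0" by blast
    have "0 < (h s x)\<^sup>2" using s unfolding h_def by simp
    also have "\<dots> \<le> (\<Sum>s\<in>S. (h s x)\<^sup>2)" using fin s by (intro member_le_sum) auto
    finally show ?thesis .
  qed
  ultimately have neg: "(\<Sum>s\<in>S. l s * g s x) < 0" using Dpos[of x]
    by (simp add: divide_neg_pos)
  have "(\<Sum>s\<in>S. l s * g s x) = \<tau> * (\<Sum>s\<in>S. l s * (snd s \<bullet> (fst s - x))) + (x - t) \<bullet> ((\<Sum>s\<in>S. l s *\<^sub>R fst s) - (\<Sum>s\<in>S. l s) *\<^sub>R x)"
    unfolding g_def
    by (simp add: inner_add_left inner_diff_right inner_sum_right sum_distrib_left
        sum.distrib algebra_simps sum_subtractf scaleR_sum_left)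
  also have "\<dots> = \<tau> * (\<Sum>s\<in>S. l s * (snd s \<bullet> (fst s - x)))"
    using lsum xeq[symmetric] by simp
  also have "(\<Sum>s\<in>S. l s * (snd s \<bullet> (fst s - x))) = (\<Sum>s\<in>S. \<Sum>r\<in>S. l s * l r * (snd s \<bullet> (fst s - fst r)))"
  proof (intro sum.cong refl)
    fix s assume "s \<in> S"
    have "fst s - x = (\<Sum>r\<in>S. l r *\<^sub>R (fst s - fst r))"
      using lsum xeq by (simp add: scaleR_diff_right sum_subtractf scaleR_sum_left[symmetric])
    then show "l s * (snd s \<bullet> (fst s - x)) = (\<Sum>r\<in>S. l s * l r * (snd s \<bullet> (fst s - fst r)))"
      by (simp add: inner_sum_right sum_distrib_left mult.assoc)
  qed
  finally have "(\<Sum>s\<in>S. l s * g s x) = \<tau> * (\<Sum>s\<in>S. \<Sum>r\<in>S. l s * l r * (snd s \<bullet> (fst s - fst r)))" .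
  moreover have "0 \<le> (\<Sum>s\<in>S. \<Sum>r\<in>S. l s * l r * (snd s \<bullet> (fst s - fst r)))"
    by (rule double_sum_mono_nonneg[OF fin _ lnn]) (use mono in force)
  ultimately show False using neg tau
    by (smt (verit) mult_nonneg_nonneg)
qed

lemma quad_bound:
  fixes r P Q :: real
  assumes "0 \<le> r" "0 \<le> P" "0 \<le> Q" "r * r \<le> P + Q * r"
  shows "r \<le> 1 + P + Q"
proof (rule ccontr)
  assume "\<not> ?thesis"
  then have r: "r > 1 + P + Q" by simp
  then have "r * r > r * (1 + P + Q)" using assms by (intro mult_strict_left_mono) auto
  moreover have "r * P \<ge> P" using mult_right_mono[of 1 r P] r assms by simp
  moreover have "r * (1 + P + Q) = r + r * P + Q * r" by (simp add: algebra_simps)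
  ultimately show False using assms by simp
qed

lemma minty_set_compact:
  fixes a c :: "'a::euclidean_space"
  shows "compact {x. 0 \<le> (c + x) \<bullet> (a - x)}"
unfolding compact_eq_bounded_closed
proof (rule conjI[rotated])
  show "closed {x. 0 \<le> (c + x) \<bullet> (a - x)}"
    by (intro closed_Collect_le continuous_intros)
  show "bounded {x. 0 \<le> (c + x) \<bullet> (a - x)}"
    unfolding bounded_iff
  proof (intro exI ballI)
    fix x assume "x \<in> {x. 0 \<le> (c + x) \<bullet> (a - x)}"
    then have h: "0 \<le> (c + x) \<bullet> (a - x)" by simp
    have "norm x * norm x = x \<bullet> x" by (simp add: dot_square_norm power2_eq_square)
    also have "\<dots> \<le> c \<bullet> a - c \<bullet> x + x \<bullet> a"
    proof -
      have "(c + x) \<bullet> (a - x) = c \<bullet> a - c \<bullet> x + x \<bullet> a - x \<bullet> x"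
        by (simp add: inner_add_left inner_diff_right)
      then show ?thesis using h by linarith
    qed
    also have "\<dots> \<le> \<bar>c \<bullet> a\<bar> + (norm c + norm a) * norm x"
    proof -
      have "\<bar>c \<bullet> x\<bar> \<le> norm c * norm x" by (rule Cauchy_Schwarz_ineq2)
      moreover have "\<bar>x \<bullet> a\<bar> \<le> norm a * norm x"
        using Cauchy_Schwarz_ineq2[of x a] by (simp add: mult.commute)
      ultimately show ?thesis by (simp add: algebra_simps abs_le_iff) linarith
    qed
    finally show "norm x \<le> 1 + \<bar>c \<bullet> a\<bar> + (norm c + norm a)"
      by (intro quad_bound) auto
  qed
qed

lemma minty_exists:
  fixes A :: "'a::euclidean_space \<Rightarrow> 'a set"
  assumes mm: "maximal_monotone A" and tau: "0 < \<tau>"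
  shows "\<exists>x. (1 / \<tau>) *\<^sub>R (t - x) \<in> A x"
proof -
  have mono: "monotone_op A" using mm unfolding maximal_monotone_def by simp
  have maxA: "A' = A" if "monotone_op A'" "\<forall>x. A x \<subseteq> A' x" for A'
  proof -
    have "\<forall>A'. monotone_op A' \<and> (\<forall>x. A x \<subseteq> A' x) \<longrightarrow> A' = A"
      using mm by (simp add: maximal_monotone_def)
    then have "monotone_op A' \<and> (\<forall>x. A x \<subseteq> A' x) \<longrightarrow> A' = A" by (rule allE)
    then show ?thesis using that by simp
  qed
  define G where "G = {(a,b). b \<in> A a}"
  define C where "C = (\<lambda>p. {x. 0 \<le> (\<tau> *\<^sub>R snd p - t + x) \<bullet> (fst p - x)})"
  have Gne: "G \<noteq> {}"
  proof
    assume "G = {}"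
    have Ae: "A y = {}" for y
    proof -
      have "b \<notin> A y" for b
      proof
        assume "b \<in> A y"
        then have "(y,b) \<in> G" unfolding G_def by simp
        then show False using \<open>G = {}\<close> by simp
      qed
      then show ?thesis by blast
    qed
    define A' where "A' = (\<lambda>y::'a. if y = 0 then {0::'a} else {})"
    have "monotone_op A'" unfolding monotone_op_def A'_def by auto
    moreover have "\<forall>x. A x \<subseteq> A' x" using Ae by auto
    ultimately have "A' = A" by (rule maxA)
    then have "A' 0 = A 0" by simp
    then show False using Ae[of 0] by (simp add: A'_def)
  qed
  then obtain p0 where p0: "p0 \<in> G" by blast
  have "C p0 \<inter> (\<Inter>p\<in>G. C p) \<noteq> {}"
  proof (rule compact_imp_fip_image)
    show "compact (C p0)" unfolding C_def
      by (rule minty_set_compact)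
    show "closed (C p)" for p unfolding C_def by (intro closed_Collect_le continuous_intros)
    fix I' assume fI: "finite I'" and I'G: "I' \<subseteq> G"
    have "\<exists>x. \<forall>(a,b)\<in>insert p0 I'. 0 \<le> (\<tau> *\<^sub>R b - t + x) \<bullet> (a - x)"
    proof (rule minty_finite[OF _ tau])
      show "finite (insert p0 I')" using fI by simp
      fix a b c d assume "(a,b) \<in> insert p0 I'" "(c,d) \<in> insert p0 I'"
      then have "b \<in> A a" "d \<in> A c" using I'G p0 unfolding G_def by auto
      then show "0 \<le> (b - d) \<bullet> (a - c)" by (intro monotone_opD[OF mono])
    qed
    then obtain x where "\<forall>(a,b)\<in>insert p0 I'. 0 \<le> (\<tau> *\<^sub>R b - t + x) \<bullet> (a - x)" by blast
    then have "x \<in> C p0 \<inter> (\<Inter>p\<in>I'. C p)" unfolding C_def by auto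
    then show "C p0 \<inter> (\<Inter>p\<in>I'. C p) \<noteq> {}" by blast
  qed
  then obtain x where xI: "x \<in> (\<Inter>p\<in>G. C p)" by blast
  have x: "0 \<le> (\<tau> *\<^sub>R b - t + x) \<bullet> (a - x)" if "b \<in> A a" for a b
  proof -
    have "(a,b) \<in> G" using that unfolding G_def by simp
    then have "x \<in> C (a,b)" using xI by blast
    then show ?thesis unfolding C_def by simp
  qed
  define v where "v = (1 / \<tau>) *\<^sub>R (t - x)"
  have xv: "0 \<le> (b - v) \<bullet> (a - x)" if "b \<in> A a" for a b
  proof -
    have "(1 / \<tau>) *\<^sub>R (\<tau> *\<^sub>R b - t + x) = b - v" unfolding v_def using tau
      by (simp add: scaleR_add_right scaleR_diff_right)
    then have "(b - v) = (1 / \<tau>) *\<^sub>R (\<tau> *\<^sub>R b - t + x)" by simp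
    then have "(b - v) \<bullet> (a - x) = (1 / \<tau>) * ((\<tau> *\<^sub>R b - t + x) \<bullet> (a - x))" by simp
    then show ?thesis using x[OF that] tau by simp
  qed
  define A' where "A' = (\<lambda>y. if y = x then insert v (A y) else A y)"
  have "monotone_op A'" unfolding monotone_op_def
  proof (intro allI impI)
    fix y1 y2 u1 u2 assume u1: "u1 \<in> A' y1" and u2: "u2 \<in> A' y2"
    have c1: "u1 \<in> A y1 \<or> (y1 = x \<and> u1 = v)" using u1 unfolding A'_def by (cases "y1 = x") auto
    have c2: "u2 \<in> A y2 \<or> (y2 = x \<and> u2 = v)" using u2 unfolding A'_def by (cases "y2 = x") auto
    consider "u1 \<in> A y1" "u2 \<in> A y2" | "y1 = x" "u1 = v" "u2 \<in> A y2" | "u1 \<in> A y1" "y2 = x" "u2 = v"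
      | "y1 = x" "u1 = v" "y2 = x" "u2 = v"
      using c1 c2 by argo
    then show "0 \<le> (u1 - u2) \<bullet> (y1 - y2)"
    proof cases
      case 1 then show ?thesis by (intro monotone_opD[OF mono])
    next
      case 2
      have "(v - u2) \<bullet> (x - y2) = (u2 - v) \<bullet> (y2 - x)"
        by (metis inner_minus_left inner_minus_right minus_diff_eq)
      then show ?thesis using xv[of u2 y2] 2 by simp
    next
      case 3 then show ?thesis using xv[of u1 y1] by simp
    next
      case 4 then show ?thesis by simp
    qed
  qed
  moreover have "\<forall>y. A y \<subseteq> A' y" unfolding A'_def by auto
  ultimately have "A' = A" by (rule maxA)
  then have "A' x = A x" by simp
  moreover have "v \<in> A' x" by (simp add: A'_def)
  ultimately have "v \<in> A x" by simp
  then show ?thesis unfolding v_def by blast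
qed

lemma resolvent_unique:
  fixes A :: "'a::real_inner \<Rightarrow> 'a set"
  assumes mono: "monotone_op A" and tau: "0 < \<tau>"
    and x: "(1 / \<tau>) *\<^sub>R (t - x) \<in> A x" and y: "(1 / \<tau>) *\<^sub>R (t - y) \<in> A y"
  shows "x = y"
proof -
  have "0 \<le> ((1 / \<tau>) *\<^sub>R (t - x) - (1 / \<tau>) *\<^sub>R (t - y)) \<bullet> (x - y)"
    using monotone_opD[OF mono x y] .
  also have "((1 / \<tau>) *\<^sub>R (t - x) - (1 / \<tau>) *\<^sub>R (t - y)) = - (1 / \<tau>) *\<^sub>R (x - y)"
    by (simp add: algebra_simps)
  finally have "0 \<le> - (1 / \<tau>) * ((x - y) \<bullet> (x - y))" by simp
  then have "(x - y) \<bullet> (x - y) \<le> 0" using tau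
    by (simp add: divide_le_0_iff)
  then show ?thesis by (metis inner_gt_zero_iff not_le right_minus_eq)
qed

lemma resolvent_prop:
  fixes A :: "'a::euclidean_space \<Rightarrow> 'a set"
  assumes mm: "maximal_monotone A" and tau: "0 < \<tau>"
  shows "(1 / \<tau>) *\<^sub>R (t - resolvent \<tau> A t) \<in> A (resolvent \<tau> A t)"
proof -
  have mono: "monotone_op A" using mm unfolding maximal_monotone_def by simp
  obtain x where x: "(1 / \<tau>) *\<^sub>R (t - x) \<in> A x" using minty_exists[OF mm tau] by blast
  have "\<exists>!x. (1 / \<tau>) *\<^sub>R (t - x) \<in> A x"
    using x resolvent_unique[OF mono tau] by blast
  then show ?thesis unfolding resolvent_def by (rule theI')
qed

lemma resolvent_nonexp:
  fixes A :: "'a::euclidean_space \<Rightarrow> 'a set"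
  assumes mm: "maximal_monotone A" and tau: "0 < \<tau>"
  shows "norm (resolvent \<tau> A t - resolvent \<tau> A s) \<le> norm (t - s)"
proof -
  have mono: "monotone_op A" using mm unfolding maximal_monotone_def by simp
  define x where "x = resolvent \<tau> A t"
  define y where "y = resolvent \<tau> A s"
  have "0 \<le> ((1 / \<tau>) *\<^sub>R (t - x) - (1 / \<tau>) *\<^sub>R (s - y)) \<bullet> (x - y)"
    unfolding x_def y_def by (rule monotone_opD[OF mono resolvent_prop[OF mm tau] resolvent_prop[OF mm tau]])
  also have "((1 / \<tau>) *\<^sub>R (t - x) - (1 / \<tau>) *\<^sub>R (s - y)) = (1 / \<tau>) *\<^sub>R ((t - s) - (x - y))"
    by (simp add: algebra_simps)
  finally have "0 \<le> (1 / \<tau>) * (((t - s) - (x - y)) \<bullet> (x - y))" by simp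
  then have "0 \<le> ((t - s) - (x - y)) \<bullet> (x - y)" using tau
    by (simp add: zero_le_divide_iff)
  then have "(x - y) \<bullet> (x - y) \<le> (t - s) \<bullet> (x - y)" by (simp add: inner_diff_left)
  also have "\<dots> \<le> norm (t - s) * norm (x - y)" by (rule norm_cauchy_schwarz)
  finally have "norm (x - y) * norm (x - y) \<le> norm (t - s) * norm (x - y)"
    by (simp add: dot_square_norm power2_eq_square)
  then show ?thesis unfolding x_def y_def
    by (cases "norm (x - y) = 0") (auto simp: x_def y_def)
qed

lemma resolvent_continuous:
  fixes A :: "'a::euclidean_space \<Rightarrow> 'a set"
  assumes mm: "maximal_monotone A" and tau: "0 < \<tau>"
  shows "continuous_on UNIV (resolvent \<tau> A)"
proof -
  have "1-lipschitz_on UNIV (resolvent \<tau> A)"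
    by (rule lipschitz_onI) (use resolvent_nonexp[OF mm tau] in \<open>auto simp: dist_norm\<close>)
  then show ?thesis by (rule lipschitz_on_continuous_on)
qed

lemma sq_step:
  fixes a b :: "'a::real_inner"
  shows "(norm (a - \<alpha> *\<^sub>R b))\<^sup>2 = (norm a)\<^sup>2 - 2 * \<alpha> * (a \<bullet> b) + \<alpha>\<^sup>2 * (norm b)\<^sup>2"
  unfolding power2_norm_eq_inner by (simp add: inner_diff_left inner_diff_right inner_commute power2_eq_square algebra_simps)

definition Vf :: "nat \<Rightarrow> 'a::real_inner \<Rightarrow> (nat \<Rightarrow> 'a) \<Rightarrow> 'a \<Rightarrow> (nat \<Rightarrow> 'a) \<Rightarrow> real" where
  "Vf n zs ws z w = (norm (z - zs))\<^sup>2 + (\<Sum>i=1..n+1. (norm (w i - ws i))\<^sup>2)"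

lemma step_identity:
  fixes z zs :: "'a::real_inner" and w ws :: "nat \<Rightarrow> 'a"
    and A :: "nat \<Rightarrow> 'a \<Rightarrow> 'a set" and B :: "'a \<Rightarrow> 'a" and \<tau> \<rho> \<alpha> :: real and eps ee :: 'a
  assumes wsum: "(\<Sum>i=1..n+1. w i) = 0" and wssum: "(\<Sum>i=1..n+1. ws i) = 0"
  defines "x \<equiv> sps_x n A B \<tau> \<rho> z w eps" and "y \<equiv> sps_y n A B \<tau> \<rho> z w eps ee"
  defines "xb \<equiv> (1 / real (n + 1)) *\<^sub>R (\<Sum>j=1..n+1. x j)"
  shows "Vf n zs ws (fst (sps_step n A B \<tau> \<rho> \<alpha> z w eps ee)) (snd (sps_step n A B \<tau> \<rho> \<alpha> z w eps ee))
       = Vf n zs ws z w - 2 * \<alpha> * (\<Sum>i=1..n+1. (z - x i) \<bullet> (y i - w i) + (x i - zs) \<bullet> (y i - ws i))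
         + \<alpha>\<^sup>2 * ((norm (\<Sum>i=1..n+1. y i))\<^sup>2 + (\<Sum>i=1..n+1. (norm (x i - xb))\<^sup>2))"
proof -
  define S where "S = (\<Sum>i=1..n+1. y i)"
  have z': "fst (sps_step n A B \<tau> \<rho> \<alpha> z w eps ee) - zs = (z - zs) - \<alpha> *\<^sub>R S"
    unfolding sps_step_def S_def y_def by simp
  have w': "snd (sps_step n A B \<tau> \<rho> \<alpha> z w eps ee) i - ws i = (w i - ws i) - \<alpha> *\<^sub>R (x i - xb)" for i
    unfolding sps_step_def xb_def x_def by simp
  have "Vf n zs ws (fst (sps_step n A B \<tau> \<rho> \<alpha> z w eps ee)) (snd (sps_step n A B \<tau> \<rho> \<alpha> z w eps ee))
     = (norm ((z - zs) - \<alpha> *\<^sub>R S))\<^sup>2 + (\<Sum>i=1..n+1. (norm ((w i - ws i) - \<alpha> *\<^sub>R (x i - xb)))\<^sup>2)"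
    unfolding Vf_def z' w' ..
  also have "\<dots> = Vf n zs ws z w - 2 * \<alpha> * ((z - zs) \<bullet> S + (\<Sum>i=1..n+1. (w i - ws i) \<bullet> (x i - xb)))
         + \<alpha>\<^sup>2 * ((norm S)\<^sup>2 + (\<Sum>i=1..n+1. (norm (x i - xb))\<^sup>2))"
    unfolding sq_step Vf_def
    by (simp add: sum.distrib sum_subtractf sum_distrib_left algebra_simps)
  also have "(z - zs) \<bullet> S + (\<Sum>i=1..n+1. (w i - ws i) \<bullet> (x i - xb))
      = (\<Sum>i=1..n+1. (z - x i) \<bullet> (y i - w i) + (x i - zs) \<bullet> (y i - ws i))"
  proof -
    have trm: "(z - x i) \<bullet> (y i - w i) + (x i - zs) \<bullet> (y i - ws i)
       = (z - zs) \<bullet> y i + (w i - ws i) \<bullet> (x i - xb) + xb \<bullet> w i - xb \<bullet> ws i - z \<bullet> w i + zs \<bullet> ws i" for i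
      by (simp add: inner_diff_left inner_diff_right inner_commute algebra_simps)
    have s1: "(\<Sum>i=1..n+1. xb \<bullet> w i) = 0" using wsum by (simp add: inner_sum_right[symmetric])
    have s2: "(\<Sum>i=1..n+1. xb \<bullet> ws i) = 0" using wssum by (simp add: inner_sum_right[symmetric])
    have s3: "(\<Sum>i=1..n+1. z \<bullet> w i) = 0" using wsum by (simp add: inner_sum_right[symmetric])
    have s4: "(\<Sum>i=1..n+1. zs \<bullet> ws i) = 0" using wssum by (simp add: inner_sum_right[symmetric])
    have s5: "(\<Sum>i=1..n+1. (z - zs) \<bullet> y i) = (z - zs) \<bullet> S" by (simp only: S_def inner_sum_right)
    show ?thesis unfolding trm
      by (simp only: sum.distrib sum_subtractf s1 s2 s3 s4 s5)
  qed
  finally show ?thesis unfolding S_def .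
qed

definition Of :: "nat \<Rightarrow> (nat \<Rightarrow> 'a \<Rightarrow> 'a set) \<Rightarrow> ('a \<Rightarrow> 'a) \<Rightarrow> real \<Rightarrow> real
    \<Rightarrow> 'a::real_inner \<Rightarrow> (nat \<Rightarrow> 'a) \<Rightarrow> 'a \<Rightarrow> 'a \<Rightarrow> real" where
  "Of n A B \<tau> \<rho> z w eps ee =
     (\<Sum>i=1..n. (norm (sps_y n A B \<tau> \<rho> z w eps ee i - w i))\<^sup>2)
     + (\<Sum>i=1..n. (norm (z - sps_x n A B \<tau> \<rho> z w eps i))\<^sup>2)
     + (norm (B z - w (n + 1)))\<^sup>2"

locale sps_setting =
  fixes n :: nat and A :: "nat \<Rightarrow> 'a::euclidean_space \<Rightarrow> 'a set" and B :: "'a \<Rightarrow> 'a"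
    and \<tau> L :: real and zs :: 'a and ws :: "nat \<Rightarrow> 'a"
  assumes A_mm: "\<forall>i\<in>{1..n}. maximal_monotone (A i)"
    and B_mono: "monotone_fun B" and L_pos: "0 < L" and B_lip: "L-lipschitz_on UNIV B"
    and tau: "0 < \<tau>"
    and ws_A: "\<forall>i\<in>{1..n}. ws i \<in> A i zs" and ws_B: "ws (n+1) = B zs"
    and ws_sum: "(\<Sum>i=1..n+1. ws i) = 0"
begin

lemma B_lipD: "norm (B x - B y) \<le> L * norm (x - y)"
  using lipschitz_onD[OF B_lip, of x y] by (simp add: dist_norm)

lemma B_cont: "continuous_on UNIV B"
  using B_lip by (rule lipschitz_on_continuous_on)

definition c0 :: real where "c0 = min (\<tau> / (1 + \<tau>\<^sup>2)) (1/2)"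

lemma c0_pos: "0 < c0" unfolding c0_def using tau by (simp add: add_pos_nonneg)

lemma term_i:
  fixes z eps ee :: 'a and w :: "nat \<Rightarrow> 'a"
  assumes i: "i \<in> {1..n}" and rho: "0 < \<rho>" "\<rho> \<le> 1"
  defines "x \<equiv> sps_x n A B \<tau> \<rho> z w eps i" and "y \<equiv> sps_y n A B \<tau> \<rho> z w eps ee i"
  shows "c0 * \<rho> * ((norm (y - w i))\<^sup>2 + (norm (z - x))\<^sup>2) \<le> (z - x) \<bullet> (y - w i) + (x - zs) \<bullet> (y - ws i)"
proof -
  have iln: "i \<le> n" using i by simp
  have mm: "maximal_monotone (A i)" using A_mm i by simp
  have mono: "monotone_op (A i)" using mm unfolding maximal_monotone_def by simp
  have xdef: "x = resolvent \<tau> (A i) (z + \<tau> *\<^sub>R w i)" unfolding x_def sps_x_def using iln by simp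
  have ydef: "y = (1 / \<tau>) *\<^sub>R ((z + \<tau> *\<^sub>R w i) - x)" unfolding y_def sps_y_def x_def using iln by simp
  have yA: "y \<in> A i x" unfolding ydef xdef by (rule resolvent_prop[OF mm tau])
  have m: "0 \<le> (y - ws i) \<bullet> (x - zs)" using monotone_opD[OF mono yA] ws_A i by simp
  have zx: "z - x = \<tau> *\<^sub>R (y - w i)" unfolding ydef using tau by (simp add: algebra_simps)
  have t1: "(z - x) \<bullet> (y - w i) = \<tau> * (norm (y - w i))\<^sup>2" unfolding zx by (simp add: power2_norm_eq_inner)
  have t2: "(norm (z - x))\<^sup>2 = \<tau>\<^sup>2 * (norm (y - w i))\<^sup>2" unfolding zx by (simp add: power_mult_distrib)
  have "c0 * \<rho> * ((norm (y - w i))\<^sup>2 + (norm (z - x))\<^sup>2) = (c0 * \<rho>) * (1 + \<tau>\<^sup>2) * (norm (y - w i))\<^sup>2"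
    unfolding t2 by (simp add: algebra_simps)
  also have "\<dots> \<le> (\<tau> / (1 + \<tau>\<^sup>2)) * (1 + \<tau>\<^sup>2) * (norm (y - w i))\<^sup>2"
  proof -
    have "c0 * \<rho> \<le> \<tau> / (1 + \<tau>\<^sup>2)"
    proof -
      have "c0 * \<rho> \<le> c0 * 1" using rho c0_pos by (intro mult_left_mono) auto
      also have "\<dots> \<le> \<tau> / (1 + \<tau>\<^sup>2)" unfolding c0_def by simp
      finally show ?thesis .
    qed
    then show ?thesis by (intro mult_right_mono) (auto simp: add_pos_nonneg)
  qed
  also have "\<dots> = \<tau> * (norm (y - w i))\<^sup>2"
  proof -
    have "1 + \<tau>\<^sup>2 \<noteq> 0" by (metis add_pos_nonneg zero_le_power2 zero_less_one less_irrefl)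
    then show ?thesis by simp
  qed
  also have "\<dots> \<le> (z - x) \<bullet> (y - w i) + (x - zs) \<bullet> (y - ws i)"
    using t1 m by (simp add: inner_commute)
  finally show ?thesis .
qed

lemma term_last:
  fixes z eps ee :: 'a and w :: "nat \<Rightarrow> 'a"
  assumes rho: "0 < \<rho>" "L * \<rho> \<le> 1/2"
  defines "x \<equiv> sps_x n A B \<tau> \<rho> z w eps (n+1)" and "y \<equiv> sps_y n A B \<tau> \<rho> z w eps ee (n+1)"
  defines "u \<equiv> B z - w (n+1)"
  shows "c0 * \<rho> * (norm u)\<^sup>2 + \<rho> * (1 - 2 * L * \<rho>) * (eps \<bullet> u) - L * \<rho>\<^sup>2 * (norm eps)\<^sup>2 + (z - zs) \<bullet> ee
     \<le> (z - x) \<bullet> (y - w (n+1)) + (x - zs) \<bullet> (y - ws (n+1))"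
proof -
  have xdef: "x = z - \<rho> *\<^sub>R (u + eps)" unfolding x_def sps_x_def u_def by (simp add: algebra_simps)
  have ydef: "y = B x + ee" unfolding y_def sps_y_def x_def by simp
  define d where "d = u + eps"
  have zx: "z - x = \<rho> *\<^sub>R d" unfolding xdef d_def by simp
  have mB: "0 \<le> (x - zs) \<bullet> (B x - B zs)" using B_mono unfolding monotone_fun_def
    by (metis inner_commute)
  have split: "(z - x) \<bullet> (y - w (n+1)) + (x - zs) \<bullet> (y - ws (n+1))
      = (z - x) \<bullet> (B x - w (n+1)) + (z - zs) \<bullet> ee + (x - zs) \<bullet> (B x - B zs)"
    unfolding ydef ws_B by (simp add: inner_diff_left inner_diff_right inner_add_left inner_add_right algebra_simps)
  have Bxw: "B x - w (n+1) = u + (B x - B z)" unfolding u_def by simp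
  have nBx: "norm (B x - B z) \<le> L * \<rho> * norm d"
    using B_lipD[of x z] unfolding zx[symmetric] using rho
    by (simp add: norm_minus_commute[of x z] zx)
  have "\<rho> * (d \<bullet> (B x - B z)) \<ge> - (\<rho> * (norm d * (L * \<rho> * norm d)))"
  proof -
    have "- (d \<bullet> (B x - B z)) \<le> norm d * norm (B x - B z)"
      using norm_cauchy_schwarz[of "-d" "B x - B z"] by simp
    also have "\<dots> \<le> norm d * (L * \<rho> * norm d)" by (intro mult_left_mono nBx) auto
    finally have "\<rho> * (- (d \<bullet> (B x - B z))) \<le> \<rho> * (norm d * (L * \<rho> * norm d))"
      using rho by (intro mult_left_mono) auto
    then show ?thesis by simp
  qed
  then have "(z - x) \<bullet> (B x - w (n+1)) \<ge> \<rho> * (d \<bullet> u) - L * \<rho>\<^sup>2 * (norm d)\<^sup>2"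
    unfolding zx Bxw by (simp add: inner_add_right power2_eq_square algebra_simps)
  moreover have "d \<bullet> u = (norm u)\<^sup>2 + eps \<bullet> u" unfolding d_def
    by (simp add: inner_add_left power2_norm_eq_inner)
  moreover have "(norm d)\<^sup>2 = (norm u)\<^sup>2 + 2 * (eps \<bullet> u) + (norm eps)\<^sup>2" unfolding d_def
    by (simp add: power2_norm_eq_inner inner_add_left inner_add_right inner_commute)
  ultimately have "(z - x) \<bullet> (B x - w (n+1)) \<ge> \<rho> * (1 - L * \<rho>) * (norm u)\<^sup>2 + \<rho> * (1 - 2 * L * \<rho>) * (eps \<bullet> u) - L * \<rho>\<^sup>2 * (norm eps)\<^sup>2"
    by (simp add: algebra_simps power2_eq_square)
  moreover have "c0 * \<rho> * (norm u)\<^sup>2 \<le> \<rho> * (1 - L * \<rho>) * (norm u)\<^sup>2"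
  proof -
    have "c0 \<le> 1 - L * \<rho>" using rho unfolding c0_def by linarith
    then have "c0 * \<rho> \<le> \<rho> * (1 - L * \<rho>)" using rho by (simp add: mult.commute mult_left_mono)
    then show ?thesis by (intro mult_right_mono) auto
  qed
  ultimately show ?thesis unfolding split using mB by linarith
qed


lemma phi_lower:
  fixes z eps ee :: 'a and w :: "nat \<Rightarrow> 'a"
  assumes rho: "0 < \<rho>" "\<rho> \<le> 1" "L * \<rho> \<le> 1/2"
  defines "x \<equiv> sps_x n A B \<tau> \<rho> z w eps" and "y \<equiv> sps_y n A B \<tau> \<rho> z w eps ee"
  shows "c0 * \<rho> * Of n A B \<tau> \<rho> z w eps ee + \<rho> * (1 - 2 * L * \<rho>) * (eps \<bullet> (B z - w (n+1)))
      - L * \<rho>\<^sup>2 * (norm eps)\<^sup>2 + (z - zs) \<bullet> ee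
     \<le> (\<Sum>i=1..n+1. (z - x i) \<bullet> (y i - w i) + (x i - zs) \<bullet> (y i - ws i))"
proof -
  have s1: "c0 * \<rho> * ((\<Sum>i=1..n. (norm (y i - w i))\<^sup>2) + (\<Sum>i=1..n. (norm (z - x i))\<^sup>2))
     \<le> (\<Sum>i=1..n. (z - x i) \<bullet> (y i - w i) + (x i - zs) \<bullet> (y i - ws i))"
  proof -
    have "c0 * \<rho> * ((\<Sum>i=1..n. (norm (y i - w i))\<^sup>2) + (\<Sum>i=1..n. (norm (z - x i))\<^sup>2))
        = (\<Sum>i=1..n. c0 * \<rho> * ((norm (y i - w i))\<^sup>2 + (norm (z - x i))\<^sup>2))"
      by (simp only: sum.distrib[symmetric] sum_distrib_left)
    also have "\<dots> \<le> (\<Sum>i=1..n. (z - x i) \<bullet> (y i - w i) + (x i - zs) \<bullet> (y i - ws i))"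
      unfolding x_def y_def by (intro sum_mono term_i) (use rho in auto)
    finally show ?thesis .
  qed
  note s2 = term_last[OF rho(1) rho(3), of z w eps ee]
  have split: "(\<Sum>i=1..n+1. (z - x i) \<bullet> (y i - w i) + (x i - zs) \<bullet> (y i - ws i))
     = (\<Sum>i=1..n. (z - x i) \<bullet> (y i - w i) + (x i - zs) \<bullet> (y i - ws i))
       + ((z - x (n+1)) \<bullet> (y (n+1) - w (n+1)) + (x (n+1) - zs) \<bullet> (y (n+1) - ws (n+1)))"
    by (simp add: sum.cl_ivl_Suc)
  have O: "Of n A B \<tau> \<rho> z w eps ee = (\<Sum>i=1..n. (norm (y i - w i))\<^sup>2) + (\<Sum>i=1..n. (norm (z - x i))\<^sup>2) + (norm (B z - w (n + 1)))\<^sup>2"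
    unfolding Of_def x_def y_def ..
  show ?thesis unfolding split O using s1 s2 unfolding x_def y_def by (simp add: algebra_simps)
qed

lemma lin_comb:
  fixes V' V \<alpha> \<Phi> G P c0 \<rho> Ov a E b N Zt :: real
  assumes "V' = V - 2 * \<alpha> * \<Phi> + \<alpha>\<^sup>2 * G" "c0 * \<rho> * Ov + a * E - b * N + Zt \<le> \<Phi>" "0 \<le> \<alpha>"
  shows "V' + 2 * \<alpha> * c0 * \<rho> * Ov \<le> V - 2 * \<alpha> * a * E + 2 * \<alpha> * b * N - 2 * \<alpha> * Zt + \<alpha>\<^sup>2 * G"
proof -
  have "2 * \<alpha> * (c0 * \<rho> * Ov + a * E - b * N + Zt) \<le> 2 * \<alpha> * \<Phi>"
    using assms(2,3) by (intro mult_left_mono) auto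
  then show ?thesis using assms(1) by (simp add: algebra_simps)
qed

lemma step_ineq:
  fixes z eps ee :: 'a and w :: "nat \<Rightarrow> 'a"
  assumes rho: "0 < \<rho>" "\<rho> \<le> 1" "L * \<rho> \<le> 1/2" and alpha: "0 \<le> \<alpha>"
    and wsum: "(\<Sum>i=1..n+1. w i) = 0"
  defines "x \<equiv> sps_x n A B \<tau> \<rho> z w eps" and "y \<equiv> sps_y n A B \<tau> \<rho> z w eps ee"
  defines "xb \<equiv> (1 / real (n + 1)) *\<^sub>R (\<Sum>j=1..n+1. x j)"
  defines "G \<equiv> (norm (\<Sum>i=1..n+1. y i))\<^sup>2 + (\<Sum>i=1..n+1. (norm (x i - xb))\<^sup>2)"
  shows "Vf n zs ws (fst (sps_step n A B \<tau> \<rho> \<alpha> z w eps ee)) (snd (sps_step n A B \<tau> \<rho> \<alpha> z w eps ee))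
        + 2 * \<alpha> * c0 * \<rho> * Of n A B \<tau> \<rho> z w eps ee
     \<le> Vf n zs ws z w - 2 * \<alpha> * \<rho> * (1 - 2 * L * \<rho>) * (eps \<bullet> (B z - w (n+1)))
        + 2 * \<alpha> * L * \<rho>\<^sup>2 * (norm eps)\<^sup>2 - 2 * \<alpha> * ((z - zs) \<bullet> ee) + \<alpha>\<^sup>2 * G"
proof -
  note id = step_identity[OF wsum ws_sum, where A=A and B=B and \<tau>=\<tau> and \<rho>=\<rho> and eps=eps and ee=ee and \<alpha>=\<alpha> and zs=zs and z=z]
  note pl = phi_lower[OF rho, of z w eps ee]
  show ?thesis
    using lin_comb[OF id[folded x_def y_def xb_def, folded G_def] pl[folded x_def y_def] alpha]
    by (simp only: mult.assoc)
qed


definition Kc :: real where "Kc = 3 + 3 * \<tau> + 2 / \<tau> + (L + 3)\<^sup>2"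

lemma Kc_ge: "2 / \<tau> + 3 \<le> Kc" "2 + 3 * \<tau> \<le> Kc" "L + 2 \<le> Kc" "L * (L + 3) \<le> Kc" "L + 1 \<le> Kc" "1 \<le> Kc"
  unfolding Kc_def using tau L_pos by (auto simp: power2_eq_square algebra_simps)

lemma Kc_pos: "0 < Kc" using Kc_ge(6) by simp

lemma res_fix: "i \<in> {1..n} \<Longrightarrow> resolvent \<tau> (A i) (zs + \<tau> *\<^sub>R ws i) = zs"
proof -
  assume i: "i \<in> {1..n}"
  have mm: "maximal_monotone (A i)" using A_mm i by simp
  have mono: "monotone_op (A i)" using mm unfolding maximal_monotone_def by simp
  have "(1 / \<tau>) *\<^sub>R ((zs + \<tau> *\<^sub>R ws i) - zs) \<in> A i zs" using ws_A i tau by simp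
  then show ?thesis using resolvent_unique[OF mono tau resolvent_prop[OF mm tau]] by blast
qed

lemma bound_i:
  fixes z eps ee :: 'a and w :: "nat \<Rightarrow> 'a" and R \<rho> :: real
  assumes i: "i \<in> {1..n}" and hz: "norm (z - zs) \<le> R" and hw: "norm (w i - ws i) \<le> R"
  defines "x \<equiv> sps_x n A B \<tau> \<rho> z w eps i" and "y \<equiv> sps_y n A B \<tau> \<rho> z w eps ee i"
  shows "norm (y - ws i) \<le> Kc * R" "norm (y - w i) \<le> Kc * R" "norm (z - x) \<le> Kc * R"
proof -
  have R0: "0 \<le> R" using hz norm_ge_zero order_trans by blast
  have iln: "i \<le> n" using i by simp
  have mm: "maximal_monotone (A i)" using A_mm i by simp
  define t where "t = z + \<tau> *\<^sub>R w i"
  define ts where "ts = zs + \<tau> *\<^sub>R ws i"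
  have xdef: "x = resolvent \<tau> (A i) t" unfolding x_def sps_x_def t_def using iln by simp
  have ydef: "y = (1 / \<tau>) *\<^sub>R (t - x)" unfolding y_def sps_y_def x_def t_def using iln by simp
  have tt: "norm (t - ts) \<le> (1 + \<tau>) * R"
  proof -
    have "t - ts = (z - zs) + \<tau> *\<^sub>R (w i - ws i)" unfolding t_def ts_def by (simp add: algebra_simps)
    then have "norm (t - ts) \<le> norm (z - zs) + \<tau> * norm (w i - ws i)"
      using norm_triangle_ineq[of "z - zs" "\<tau> *\<^sub>R (w i - ws i)"] tau by simp
    also have "\<dots> \<le> R + \<tau> * R" using hz hw tau by (intro add_mono mult_left_mono) auto
    finally show ?thesis by (simp add: algebra_simps)
  qed
  have xz: "norm (x - zs) \<le> (1 + \<tau>) * R"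
    using resolvent_nonexp[OF mm tau, of t ts] res_fix[OF i] tt unfolding xdef ts_def by simp
  have "y - ws i = (1 / \<tau>) *\<^sub>R ((t - ts) - (x - zs))" unfolding ydef ts_def using tau
    by (simp add: algebra_simps)
  then have "norm (y - ws i) = (1 / \<tau>) * norm ((t - ts) - (x - zs))" using tau by simp
  also have "\<dots> \<le> (1 / \<tau>) * (norm (t - ts) + norm (x - zs))"
    using tau by (intro mult_left_mono norm_triangle_ineq4) auto
  also have "\<dots> \<le> (1 / \<tau>) * ((1 + \<tau>) * R + (1 + \<tau>) * R)" using tt xz tau by (intro mult_left_mono add_mono) auto
  also have "\<dots> = (2 / \<tau> + 2) * R" using tau by (simp add: field_simps)
  finally have y1: "norm (y - ws i) \<le> (2 / \<tau> + 2) * R" .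
  moreover have "(2 / \<tau> + 2) * R \<le> Kc * R" using Kc_ge(1) R0 by (intro mult_right_mono) auto
  ultimately show "norm (y - ws i) \<le> Kc * R" by linarith
  have y2: "norm (y - w i) \<le> (2 / \<tau> + 3) * R"
  proof -
    have "norm (y - w i) \<le> norm (y - ws i) + norm (w i - ws i)"
      using norm_triangle_ineq4[of "y - ws i" "w i - ws i"] by simp
    also have "\<dots> \<le> (2 / \<tau> + 2) * R + R" using y1 hw by simp
    finally show ?thesis by (simp add: algebra_simps)
  qed
  moreover have "(2 / \<tau> + 3) * R \<le> Kc * R" using Kc_ge(1) R0 by (intro mult_right_mono) auto
  ultimately show "norm (y - w i) \<le> Kc * R" by linarith
  have "z - x = \<tau> *\<^sub>R (y - w i)" unfolding ydef t_def using tau by (simp add: algebra_simps)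
  then have "norm (z - x) = \<tau> * norm (y - w i)" using tau by simp
  also have "\<dots> \<le> \<tau> * ((2 / \<tau> + 3) * R)" using y2 tau by (intro mult_left_mono) auto
  also have "\<dots> = (2 + 3 * \<tau>) * R" using tau by (simp add: field_simps)
  also have "\<dots> \<le> Kc * R" using Kc_ge(2) R0 by (intro mult_right_mono) auto
  finally show "norm (z - x) \<le> Kc * R" .
qed

lemma bound_last:
  fixes z eps ee :: 'a and w :: "nat \<Rightarrow> 'a" and R \<rho> :: real
  assumes rho: "0 < \<rho>" "\<rho> \<le> 1" and hz: "norm (z - zs) \<le> R" and hw: "norm (w (n+1) - ws (n+1)) \<le> R"
    and he: "norm eps \<le> R"
  defines "x \<equiv> sps_x n A B \<tau> \<rho> z w eps (n+1)" and "y \<equiv> sps_y n A B \<tau> \<rho> z w eps ee (n+1)"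
  shows "norm (B z - w (n+1)) \<le> Kc * R" "norm (z - x) \<le> Kc * R" "norm (B x - B zs) \<le> Kc * R"
    "norm (y - ws (n+1)) \<le> Kc * R + norm ee"
proof -
  have R0: "0 \<le> R" using hz norm_ge_zero order_trans by blast
  have u: "norm (B z - w (n+1)) \<le> (L + 1) * R"
  proof -
    have "B z - w (n+1) = (B z - B zs) - (w (n+1) - ws (n+1))" using ws_B by simp
    then have "norm (B z - w (n+1)) \<le> norm (B z - B zs) + norm (w (n+1) - ws (n+1))"
      by (metis norm_triangle_ineq4)
    also have "\<dots> \<le> L * R + R"
    proof -
      have "L * norm (z - zs) \<le> L * R" using hz L_pos by (intro mult_left_mono) auto
      then show ?thesis using B_lipD[of z zs] hw by linarith
    qed
    finally show ?thesis by (simp add: algebra_simps)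
  qed
  moreover have "(L + 1) * R \<le> Kc * R" using Kc_ge(5) R0 by (intro mult_right_mono) auto
  ultimately show "norm (B z - w (n+1)) \<le> Kc * R" by linarith
  have xz: "z - x = \<rho> *\<^sub>R ((B z - w (n+1)) + eps)" unfolding x_def sps_x_def by (simp add: algebra_simps)
  have nxz: "norm (z - x) \<le> (L + 2) * R"
  proof -
    have "norm (z - x) = \<rho> * norm ((B z - w (n+1)) + eps)" unfolding xz using rho by simp
    also have "\<dots> \<le> 1 * norm ((B z - w (n+1)) + eps)" using rho by (intro mult_right_mono) auto
    also have "\<dots> \<le> (L + 1) * R + R" using norm_triangle_ineq[of "B z - w (n+1)" eps] u he by simp
    finally show ?thesis by (simp add: algebra_simps)
  qed
  moreover have "(L + 2) * R \<le> Kc * R" using Kc_ge(3) R0 by (intro mult_right_mono) auto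
  ultimately show "norm (z - x) \<le> Kc * R" by linarith
  have nxs: "norm (x - zs) \<le> (L + 3) * R"
  proof -
    have "x - zs = (x - z) + (z - zs)" by simp
    then have "norm (x - zs) \<le> norm (x - z) + norm (z - zs)" by (metis norm_triangle_ineq)
    then have "norm (x - zs) \<le> norm (z - x) + norm (z - zs)" by (simp add: norm_minus_commute)
    also have "\<dots> \<le> (L + 2) * R + R" using nxz hz by simp
    finally show ?thesis by (simp add: algebra_simps)
  qed
  have nB: "norm (B x - B zs) \<le> L * (L + 3) * R"
  proof -
    have "L * norm (x - zs) \<le> L * ((L + 3) * R)" using nxs L_pos by (intro mult_left_mono) auto
    then show ?thesis using B_lipD[of x zs] by (simp add: mult.assoc)
  qed
  have KB: "L * (L + 3) * R \<le> Kc * R" using Kc_ge(4) R0 by (intro mult_right_mono) auto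
  then show "norm (B x - B zs) \<le> Kc * R" using nB by linarith
  have "y - ws (n+1) = (B x - B zs) + ee" unfolding y_def sps_y_def x_def using ws_B by simp
  then have "norm (y - ws (n+1)) \<le> norm (B x - B zs) + norm ee" by (metis norm_triangle_ineq)
  then show "norm (y - ws (n+1)) \<le> Kc * R + norm ee" using nB KB by linarith
qed


lemma Vf_ge:
  shows "(norm (z - zs))\<^sup>2 \<le> Vf n zs ws z w" "i \<in> {1..n+1} \<Longrightarrow> (norm (w i - ws i))\<^sup>2 \<le> Vf n zs ws z w"
    "0 \<le> Vf n zs ws z w"
proof -
  have s0: "0 \<le> (\<Sum>i=1..n+1. (norm (w i - ws i))\<^sup>2)" by (intro sum_nonneg) auto
  then show "(norm (z - zs))\<^sup>2 \<le> Vf n zs ws z w" unfolding Vf_def by simp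
  show "0 \<le> Vf n zs ws z w" using s0 unfolding Vf_def by simp
  assume "i \<in> {1..n+1}"
  then have "(norm (w i - ws i))\<^sup>2 \<le> (\<Sum>i=1..n+1. (norm (w i - ws i))\<^sup>2)"
    by (intro member_le_sum) auto
  then show "(norm (w i - ws i))\<^sup>2 \<le> Vf n zs ws z w" unfolding Vf_def
    using zero_le_power2[of "norm (z - zs)"] by linarith
qed

lemma sqrt_bound:
  fixes a S :: real
  assumes "a\<^sup>2 \<le> S" "0 \<le> a"
  shows "a \<le> sqrt S"
  using assms real_le_rsqrt by blast

lemma sq_add_le: "((a::real) + b)\<^sup>2 \<le> 2 * a\<^sup>2 + 2 * b\<^sup>2"
proof -
  have "0 \<le> (a - b)\<^sup>2" by simp
  then show ?thesis by (simp add: power2_eq_square algebra_simps)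
qed

lemma norm_diff_sq_le: "(norm ((a::'b::real_normed_vector) - b))\<^sup>2 \<le> 2 * (norm a)\<^sup>2 + 2 * (norm b)\<^sup>2"
proof -
  have "norm (a - b) \<le> norm a + norm b" by (rule norm_triangle_ineq4)
  then have "(norm (a - b))\<^sup>2 \<le> (norm a + norm b)\<^sup>2" by (intro power_mono) auto
  also have "\<dots> \<le> 2 * (norm a)\<^sup>2 + 2 * (norm b)\<^sup>2" by (rule sq_add_le)
  finally show ?thesis .
qed

definition Cg :: real where "Cg = (real (n+1))\<^sup>2 * (Kc + 1)\<^sup>2 + 4 * real (n+1) * Kc\<^sup>2"

lemma G_bound:
  fixes z eps ee :: 'a and w :: "nat \<Rightarrow> 'a" and \<rho> :: real
  assumes rho: "0 < \<rho>" "\<rho> \<le> 1"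
  defines "x \<equiv> sps_x n A B \<tau> \<rho> z w eps" and "y \<equiv> sps_y n A B \<tau> \<rho> z w eps ee"
  defines "xb \<equiv> (1 / real (n + 1)) *\<^sub>R (\<Sum>j=1..n+1. x j)"
  shows "(norm (\<Sum>i=1..n+1. y i))\<^sup>2 + (\<Sum>i=1..n+1. (norm (x i - xb))\<^sup>2)
      \<le> Cg * (Vf n zs ws z w + (norm eps)\<^sup>2 + (norm ee)\<^sup>2)"
proof -
  define R where "R = sqrt (Vf n zs ws z w + (norm eps)\<^sup>2 + (norm ee)\<^sup>2)"
  have V0: "0 \<le> Vf n zs ws z w" by (rule Vf_ge(3))
  have Rn: "0 \<le> Vf n zs ws z w + (norm eps)\<^sup>2 + (norm ee)\<^sup>2"
    using V0 zero_le_power2[of "norm eps"] zero_le_power2[of "norm ee"] by linarith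
  then have R0: "0 \<le> R" unfolding R_def by simp
  from Rn have R2: "R\<^sup>2 = Vf n zs ws z w + (norm eps)\<^sup>2 + (norm ee)\<^sup>2" unfolding R_def by simp
  note sq = zero_le_power2[of "norm eps"] zero_le_power2[of "norm ee"] V0
  have hz: "norm (z - zs) \<le> R" unfolding R_def using Vf_ge(1)[where z=z and w=w] sq
    by (intro sqrt_bound) (linarith, simp)
  have hw: "norm (w i - ws i) \<le> R" if "i \<in> {1..n+1}" for i unfolding R_def
    using Vf_ge(2)[OF that, where z=z and w=w] sq by (intro sqrt_bound) (linarith, simp)
  have he: "norm eps \<le> R" unfolding R_def using sq by (intro sqrt_bound) (linarith, simp)
  have hee: "norm ee \<le> R" unfolding R_def using sq by (intro sqrt_bound) (linarith, simp)
  have yb: "norm (y i - ws i) \<le> (Kc + 1) * R" if i: "i \<in> {1..n+1}" for i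
  proof (cases "i \<le> n")
    case True
    then have "i \<in> {1..n}" using i by simp
    from bound_i(1)[where w=w and z=z and \<rho>=\<rho> and eps=eps and ee=ee, OF this hz hw[OF i]] show ?thesis unfolding y_def using R0 by (simp add: algebra_simps)
  next
    case False
    then have "i = n+1" using i by simp
    with bound_last(4)[where w=w and z=z and eps=eps and ee=ee, OF rho hz hw[of "n+1"] he] hee show ?thesis unfolding y_def
      by (simp add: algebra_simps)
  qed
  have xzb: "norm (z - x i) \<le> Kc * R" if i: "i \<in> {1..n+1}" for i
  proof (cases "i \<le> n")
    case True
    then have "i \<in> {1..n}" using i by simp
    from bound_i(3)[where w=w and z=z and \<rho>=\<rho> and eps=eps, OF this hz hw[OF i]] show ?thesis unfolding x_def .
  next
    case False
    then have "i = n+1" using i by simp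
    with bound_last(2)[where w=w and z=z and eps=eps, OF rho hz hw[of "n+1"] he] show ?thesis unfolding x_def by simp
  qed
  have Sy: "(\<Sum>i=1..n+1. y i) = (\<Sum>i=1..n+1. y i - ws i)" using ws_sum by (simp add: sum_subtractf)
  have nS: "norm (\<Sum>i=1..n+1. y i) \<le> real (n+1) * ((Kc + 1) * R)"
  proof -
    have "norm (\<Sum>i=1..n+1. y i) \<le> (\<Sum>i=1..n+1. norm (y i - ws i))" unfolding Sy by (rule norm_sum)
    also have "\<dots> \<le> real (card {1..n+1}) * ((Kc + 1) * R)" by (rule sum_bounded_above) (use yb in auto)
    finally show ?thesis by simp
  qed
  have t1: "(norm (\<Sum>i=1..n+1. y i))\<^sup>2 \<le> (real (n+1))\<^sup>2 * (Kc + 1)\<^sup>2 * R\<^sup>2"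
  proof -
    have "(norm (\<Sum>i=1..n+1. y i))\<^sup>2 \<le> (real (n+1) * ((Kc + 1) * R))\<^sup>2" by (intro power_mono nS) auto
    then show ?thesis by (simp add: power_mult_distrib)
  qed
  have zxb: "z - xb = (1 / real (n + 1)) *\<^sub>R (\<Sum>j=1..n+1. z - x j)"
  proof -
    have "(\<Sum>j=1..n+1. z) = real (n+1) *\<^sub>R z" by (simp add: sum_constant_scaleR)
    then have "(1 / real (n + 1)) *\<^sub>R (\<Sum>j=1..n+1. z) = z" by simp
    then show ?thesis unfolding xb_def by (simp add: sum_subtractf scaleR_diff_right)
  qed
  have nzxb: "norm (z - xb) \<le> Kc * R"
  proof -
    have "norm (z - xb) = (1 / real (n + 1)) * norm (\<Sum>j=1..n+1. z - x j)" unfolding zxb by simp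
    also have "\<dots> \<le> (1 / real (n + 1)) * (\<Sum>j=1..n+1. norm (z - x j))" by (intro mult_left_mono norm_sum) auto
    also have "\<dots> \<le> (1 / real (n + 1)) * (real (card {1..n+1}) * (Kc * R))"
      by (intro mult_left_mono sum_bounded_above) (use xzb in auto)
    also have "\<dots> = Kc * R" by simp
    finally show ?thesis .
  qed
  have t2: "(\<Sum>i=1..n+1. (norm (x i - xb))\<^sup>2) \<le> 4 * real (n+1) * Kc\<^sup>2 * R\<^sup>2"
  proof -
    have "(norm (x i - xb))\<^sup>2 \<le> 4 * Kc\<^sup>2 * R\<^sup>2" if i: "i \<in> {1..n+1}" for i
    proof -
      have "x i - xb = (z - xb) - (z - x i)" by simp
      then have "norm (x i - xb) \<le> norm (z - xb) + norm (z - x i)" by (metis norm_triangle_ineq4)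
      also have "\<dots> \<le> 2 * (Kc * R)" using nzxb xzb[OF i] by simp
      finally have "(norm (x i - xb))\<^sup>2 \<le> (2 * (Kc * R))\<^sup>2" by (intro power_mono) auto
      then show ?thesis by (simp add: power_mult_distrib)
    qed
    then have "(\<Sum>i=1..n+1. (norm (x i - xb))\<^sup>2) \<le> real (card {1..n+1}) * (4 * Kc\<^sup>2 * R\<^sup>2)"
      by (intro sum_bounded_above) auto
    then show ?thesis by (simp add: algebra_simps)
  qed
  have "(norm (\<Sum>i=1..n+1. y i))\<^sup>2 + (\<Sum>i=1..n+1. (norm (x i - xb))\<^sup>2) \<le> Cg * R\<^sup>2"
    using t1 t2 unfolding Cg_def by (simp add: algebra_simps)
  then show ?thesis unfolding R2 .
qed


lemma R_facts:
  fixes z eps :: 'a and w :: "nat \<Rightarrow> 'a"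
  defines "R \<equiv> sqrt (Vf n zs ws z w + (norm eps)\<^sup>2)"
  shows "norm (z - zs) \<le> R" "\<And>i. i \<in> {1..n+1} \<Longrightarrow> norm (w i - ws i) \<le> R" "norm eps \<le> R"
    "R\<^sup>2 = Vf n zs ws z w + (norm eps)\<^sup>2" "0 \<le> R"
proof -
  have V0: "0 \<le> Vf n zs ws z w" by (rule Vf_ge(3))
  note sq = zero_le_power2[of "norm eps"] V0
  show "norm (z - zs) \<le> R" unfolding R_def using Vf_ge(1)[where z=z and w=w] sq
    by (intro sqrt_bound) (linarith, simp)
  show "norm (w i - ws i) \<le> R" if "i \<in> {1..n+1}" for i unfolding R_def
    using Vf_ge(2)[OF that, where z=z and w=w] sq by (intro sqrt_bound) (linarith, simp)
  show "norm eps \<le> R" unfolding R_def using sq by (intro sqrt_bound) (linarith, simp)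
  have "0 \<le> Vf n zs ws z w + (norm eps)\<^sup>2" using sq by linarith
  then show "R\<^sup>2 = Vf n zs ws z w + (norm eps)\<^sup>2" "0 \<le> R" unfolding R_def by simp_all
qed

definition Co :: real where "Co = (2 * real n + 1) * Kc\<^sup>2"

lemma O_bound:
  fixes z eps ee :: 'a and w :: "nat \<Rightarrow> 'a" and \<rho> :: real
  assumes rho: "0 < \<rho>" "\<rho> \<le> 1"
  shows "Of n A B \<tau> \<rho> z w eps ee \<le> Co * (Vf n zs ws z w + (norm eps)\<^sup>2)"
proof -
  define R where "R = sqrt (Vf n zs ws z w + (norm eps)\<^sup>2)"
  note RF = R_facts[where z=z and w=w and eps=eps, folded R_def]
  have a1: "(norm (sps_y n A B \<tau> \<rho> z w eps ee i - w i))\<^sup>2 \<le> Kc\<^sup>2 * R\<^sup>2" if i: "i \<in> {1..n}" for i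
  proof -
    have "norm (sps_y n A B \<tau> \<rho> z w eps ee i - w i) \<le> Kc * R"
      using bound_i(2)[where w=w and z=z and \<rho>=\<rho> and eps=eps and ee=ee, OF i RF(1) RF(2)] i by simp
    then have "(norm (sps_y n A B \<tau> \<rho> z w eps ee i - w i))\<^sup>2 \<le> (Kc * R)\<^sup>2" by (intro power_mono) auto
    then show ?thesis by (simp add: power_mult_distrib)
  qed
  have a2: "(norm (z - sps_x n A B \<tau> \<rho> z w eps i))\<^sup>2 \<le> Kc\<^sup>2 * R\<^sup>2" if i: "i \<in> {1..n}" for i
  proof -
    have "norm (z - sps_x n A B \<tau> \<rho> z w eps i) \<le> Kc * R"
      using bound_i(3)[where w=w and z=z and \<rho>=\<rho> and eps=eps, OF i RF(1) RF(2)] i by simp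
    then have "(norm (z - sps_x n A B \<tau> \<rho> z w eps i))\<^sup>2 \<le> (Kc * R)\<^sup>2" by (intro power_mono) auto
    then show ?thesis by (simp add: power_mult_distrib)
  qed
  have a3: "(norm (B z - w (n + 1)))\<^sup>2 \<le> Kc\<^sup>2 * R\<^sup>2"
  proof -
    have "norm (B z - w (n + 1)) \<le> Kc * R"
      using bound_last(1)[where w=w and z=z and eps=eps, OF rho RF(1) RF(2) RF(3)] by simp
    then have "(norm (B z - w (n + 1)))\<^sup>2 \<le> (Kc * R)\<^sup>2" by (intro power_mono) auto
    then show ?thesis by (simp add: power_mult_distrib)
  qed
  have "(\<Sum>i=1..n. (norm (sps_y n A B \<tau> \<rho> z w eps ee i - w i))\<^sup>2) \<le> real (card {1..n}) * (Kc\<^sup>2 * R\<^sup>2)"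
    by (intro sum_bounded_above a1)
  moreover have "(\<Sum>i=1..n. (norm (z - sps_x n A B \<tau> \<rho> z w eps i))\<^sup>2) \<le> real (card {1..n}) * (Kc\<^sup>2 * R\<^sup>2)"
    by (intro sum_bounded_above a2)
  ultimately have "Of n A B \<tau> \<rho> z w eps ee \<le> Co * R\<^sup>2"
    unfolding Of_def Co_def using a3 by (simp add: algebra_simps)
  then show ?thesis unfolding RF(4) .
qed

lemma Bx_bound:
  fixes z eps ee :: 'a and w :: "nat \<Rightarrow> 'a" and \<rho> :: real
  assumes rho: "0 < \<rho>" "\<rho> \<le> 1"
  shows "(norm (B (sps_x n A B \<tau> \<rho> z w eps (n+1))))\<^sup>2 \<le> 2 * Kc\<^sup>2 * (Vf n zs ws z w + (norm eps)\<^sup>2) + 2 * (norm (B zs))\<^sup>2"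
proof -
  define R where "R = sqrt (Vf n zs ws z w + (norm eps)\<^sup>2)"
  note RF = R_facts[where z=z and w=w and eps=eps, folded R_def]
  define x where "x = sps_x n A B \<tau> \<rho> z w eps (n+1)"
  have "norm (B x - B zs) \<le> Kc * R"
    using bound_last(3)[where w=w and z=z and eps=eps, OF rho RF(1) RF(2) RF(3)] unfolding x_def by simp
  then have "norm (B x) \<le> Kc * R + norm (B zs)" using norm_triangle_sub[of "B x" "B zs"] by simp
  then have "(norm (B x))\<^sup>2 \<le> (Kc * R + norm (B zs))\<^sup>2" by (intro power_mono) auto
  also have "\<dots> \<le> 2 * (Kc * R)\<^sup>2 + 2 * (norm (B zs))\<^sup>2" by (rule sq_add_le)
  finally show ?thesis unfolding x_def RF(4)[symmetric] by (simp add: power_mult_distrib)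
qed

lemma Bz_bound: "(norm (B z))\<^sup>2 \<le> 2 * L\<^sup>2 * Vf n zs ws z w + 2 * (norm (B zs))\<^sup>2"
proof -
  have "norm (B z) \<le> norm (B z - B zs) + norm (B zs)" using norm_triangle_sub[of "B z" "B zs"] by simp
  also have "\<dots> \<le> L * norm (z - zs) + norm (B zs)" using B_lipD[of z zs] by simp
  finally have "(norm (B z))\<^sup>2 \<le> (L * norm (z - zs) + norm (B zs))\<^sup>2" by (intro power_mono) auto
  also have "\<dots> \<le> 2 * (L * norm (z - zs))\<^sup>2 + 2 * (norm (B zs))\<^sup>2" by (rule sq_add_le)
  also have "(L * norm (z - zs))\<^sup>2 \<le> L\<^sup>2 * Vf n zs ws z w"
    using Vf_ge(1)[where z=z and w=w] by (simp add: power_mult_distrib mult_left_mono)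
  finally show ?thesis by simp
qed

lemma Vnext_bound:
  fixes z eps ee :: 'a and w :: "nat \<Rightarrow> 'a" and \<rho> \<alpha> :: real
  defines "x \<equiv> sps_x n A B \<tau> \<rho> z w eps" and "y \<equiv> sps_y n A B \<tau> \<rho> z w eps ee"
  defines "xb \<equiv> (1 / real (n + 1)) *\<^sub>R (\<Sum>j=1..n+1. x j)"
  shows "Vf n zs ws (fst (sps_step n A B \<tau> \<rho> \<alpha> z w eps ee)) (snd (sps_step n A B \<tau> \<rho> \<alpha> z w eps ee))
     \<le> 2 * Vf n zs ws z w + 2 * \<alpha>\<^sup>2 * ((norm (\<Sum>i=1..n+1. y i))\<^sup>2 + (\<Sum>i=1..n+1. (norm (x i - xb))\<^sup>2))"
proof -
  define S where "S = (\<Sum>i=1..n+1. y i)"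
  have z': "fst (sps_step n A B \<tau> \<rho> \<alpha> z w eps ee) - zs = (z - zs) - \<alpha> *\<^sub>R S"
    unfolding sps_step_def S_def y_def by simp
  have w': "snd (sps_step n A B \<tau> \<rho> \<alpha> z w eps ee) i - ws i = (w i - ws i) - \<alpha> *\<^sub>R (x i - xb)" for i
    unfolding sps_step_def xb_def x_def by simp
  have "Vf n zs ws (fst (sps_step n A B \<tau> \<rho> \<alpha> z w eps ee)) (snd (sps_step n A B \<tau> \<rho> \<alpha> z w eps ee))
     = (norm ((z - zs) - \<alpha> *\<^sub>R S))\<^sup>2 + (\<Sum>i=1..n+1. (norm ((w i - ws i) - \<alpha> *\<^sub>R (x i - xb)))\<^sup>2)"
    unfolding Vf_def z' w' ..
  also have "\<dots> \<le> (2 * (norm (z - zs))\<^sup>2 + 2 * (norm (\<alpha> *\<^sub>R S))\<^sup>2)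
       + (\<Sum>i=1..n+1. 2 * (norm (w i - ws i))\<^sup>2 + 2 * (norm (\<alpha> *\<^sub>R (x i - xb)))\<^sup>2)"
    by (intro add_mono sum_mono norm_diff_sq_le)
  also have "\<dots> = 2 * Vf n zs ws z w + 2 * \<alpha>\<^sup>2 * ((norm S)\<^sup>2 + (\<Sum>i=1..n+1. (norm (x i - xb))\<^sup>2))"
    unfolding Vf_def norm_scaleR power_mult_distrib power2_abs
    by (simp add: sum.distrib sum_distrib_left algebra_simps)
  finally show ?thesis unfolding S_def .
qed

lemma wsum_step:
  assumes "(\<Sum>i=1..n+1. w i) = 0"
  shows "(\<Sum>i=1..n+1. snd (sps_step n A B \<tau> \<rho> \<alpha> z w eps ee) i) = 0"
proof -
  define x where "x = sps_x n A B \<tau> \<rho> z w eps"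
  define xb where "xb = (1 / real (n + 1)) *\<^sub>R (\<Sum>j=1..n+1. x j)"
  have "(\<Sum>i=1..n+1. x i - xb) = (\<Sum>i=1..n+1. x i) - real (n+1) *\<^sub>R xb"
    by (simp add: sum_subtractf sum_constant_scaleR)
  also have "\<dots> = 0" unfolding xb_def by simp
  finally have "(\<Sum>i=1..n+1. x i - xb) = 0" .
  then have "(\<Sum>i=1..n+1. w i - \<alpha> *\<^sub>R (x i - xb)) = 0"
    using assms by (simp add: sum_subtractf scaleR_sum_right[symmetric])
  then show ?thesis unfolding sps_step_def x_def xb_def by simp
qed

end

lemma sigma_gen_subalg:
  fixes Fs :: "('m \<Rightarrow> 'a::topological_space) set"
  assumes meas: "\<And>f. f \<in> Fs \<Longrightarrow> f \<in> borel_measurable M"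
  shows "subalgebra M (sigma_gen M Fs)" and "\<And>f. f \<in> Fs \<Longrightarrow> f \<in> borel_measurable (sigma_gen M Fs)"
proof -
  define G where "G = {f -` U \<inter> space M | f U. f \<in> Fs \<and> open U}"
  have GM: "G \<subseteq> sets M"
  proof
    fix S assume "S \<in> G"
    then obtain f U where S: "S = f -` U \<inter> space M" "f \<in> Fs" "open U" unfolding G_def by blast
    have "U \<in> sets borel" using S(3) by simp
    then show "S \<in> sets M" using measurable_sets[OF meas[OF S(2)]] S(1) by simp
  qed
  have GP: "G \<subseteq> Pow (space M)" unfolding G_def by auto
  have sg: "sigma_gen M Fs = sigma (space M) G" unfolding sigma_gen_def G_def ..
  have sp: "space (sigma_gen M Fs) = space M" unfolding sg using GP by (simp add: space_measure_of)
  have st: "sets (sigma_gen M Fs) = sigma_sets (space M) G" unfolding sg using GP by (simp add: sets_measure_of)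
  show "subalgebra M (sigma_gen M Fs)" unfolding subalgebra_def
    using sp st GM sets.sigma_sets_subset[OF GM] by simp
  fix f assume f: "f \<in> Fs"
  show "f \<in> borel_measurable (sigma_gen M Fs)"
  proof (rule borel_measurableI)
    fix S :: "'a set" assume "open S"
    then have "f -` S \<inter> space M \<in> G" unfolding G_def using f by blast
    then show "f -` S \<inter> space (sigma_gen M Fs) \<in> sets (sigma_gen M Fs)"
      unfolding sp st by (rule sigma_sets.Basic)
  qed
qed

lemma cond_nn_bound:
  fixes f g :: "'m \<Rightarrow> real"
  assumes P: "prob_space M" and sub: "subalgebra M F"
    and fm: "f \<in> borel_measurable M" and f0: "\<And>x. 0 \<le> f x"
    and gi: "integrable M g" and g0: "\<And>x. 0 \<le> g x"
    and ae: "AE x in M. nn_cond_exp M F (\<lambda>x. ennreal (f x)) x \<le> ennreal (g x)"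
  shows "integrable M f" "integral\<^sup>L M f \<le> integral\<^sup>L M g"
proof -
  interpret prob_space M by (rule P)
  interpret finite_measure_subalgebra M F
    by (rule finite_measure_subalgebra.intro[OF finite_measure_axioms]) (unfold_locales, rule sub)
  have "(\<integral>\<^sup>+ x. ennreal (f x) \<partial>M) = (\<integral>\<^sup>+ x. 1 * nn_cond_exp M F (\<lambda>x. ennreal (f x)) x \<partial>M)"
    using nn_cond_exp_intg[of "\<lambda>_. 1" "\<lambda>x. ennreal (f x)"] fm by simp
  also have "\<dots> \<le> (\<integral>\<^sup>+ x. ennreal (g x) \<partial>M)"
    using ae by (intro nn_integral_mono_AE) auto
  also have "\<dots> = ennreal (integral\<^sup>L M g)"
    using gi g0 by (intro nn_integral_eq_integral) auto
  finally have le: "(\<integral>\<^sup>+ x. ennreal (f x) \<partial>M) \<le> ennreal (integral\<^sup>L M g)" .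
  show fi: "integrable M f"
    using le fm f0 by (intro integrableI_nonneg) (auto simp: top_unique less_top[symmetric] order.strict_trans1)
  have "ennreal (integral\<^sup>L M f) = (\<integral>\<^sup>+ x. ennreal (f x) \<partial>M)"
    using fi f0 by (intro nn_integral_eq_integral[symmetric]) auto
  with le have "ennreal (integral\<^sup>L M f) \<le> ennreal (integral\<^sup>L M g)" by simp
  moreover have "0 \<le> integral\<^sup>L M g" using g0 by (intro integral_nonneg_AE) auto
  ultimately show "integral\<^sup>L M f \<le> integral\<^sup>L M g" by (simp add: ennreal_le_iff)
qed

lemma abs_prod_le: "\<bar>(a::real) * b\<bar> \<le> a\<^sup>2 + b\<^sup>2"
proof -
  have h1: "0 \<le> (\<bar>a\<bar> - \<bar>b\<bar>)\<^sup>2" by simp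
  have h2: "(\<bar>a\<bar> - \<bar>b\<bar>)\<^sup>2 = a\<^sup>2 + b\<^sup>2 - 2 * (\<bar>a\<bar> * \<bar>b\<bar>)" by (simp add: power2_diff)
  have h3: "\<bar>a * b\<bar> = \<bar>a\<bar> * \<bar>b\<bar>" by (simp add: abs_mult)
  have h4: "0 \<le> \<bar>a\<bar> * \<bar>b\<bar>" by simp
  show ?thesis using h1 h2 h3 h4 by linarith
qed

lemma cond_zero_inner:
  fixes X Y :: "'m \<Rightarrow> 'a::euclidean_space"
  assumes P: "prob_space M" and sub: "subalgebra M F"
    and Xm: "X \<in> borel_measurable M" and YF: "Y \<in> borel_measurable F"
    and Xi: "integrable M (\<lambda>x. (norm (X x))\<^sup>2)" and Yi: "integrable M (\<lambda>x. (norm (Y x))\<^sup>2)"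
    and ce: "\<forall>b\<in>Basis. AE x in M. real_cond_exp M F (\<lambda>x. X x \<bullet> b) x = 0"
  shows "integrable M (\<lambda>x. X x \<bullet> Y x)" "integral\<^sup>L M (\<lambda>x. X x \<bullet> Y x) = 0"
proof -
  interpret prob_space M by (rule P)
  interpret finite_measure_subalgebra M F
    by (rule finite_measure_subalgebra.intro[OF finite_measure_axioms]) (unfold_locales, rule sub)
  have Ym: "Y \<in> borel_measurable M" using YF sub by (rule measurable_from_subalg[rotated])
  have ib: "integrable M (\<lambda>x. (Y x \<bullet> b) * (X x \<bullet> b))" if b: "b \<in> Basis" for b
  proof (rule Bochner_Integration.integrable_bound)
    show "integrable M (\<lambda>x. (norm (X x))\<^sup>2 + (norm (Y x))\<^sup>2)" using Xi Yi by simp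
    show "(\<lambda>x. (Y x \<bullet> b) * (X x \<bullet> b)) \<in> borel_measurable M" using Xm Ym by measurable
    show "AE x in M. norm ((Y x \<bullet> b) * (X x \<bullet> b)) \<le> norm ((norm (X x))\<^sup>2 + (norm (Y x))\<^sup>2)"
    proof (intro AE_I2)
      fix x
      have "\<bar>Y x \<bullet> b\<bar> \<le> norm (Y x)" using b by (rule Basis_le_norm)
      moreover have "\<bar>X x \<bullet> b\<bar> \<le> norm (X x)" using b by (rule Basis_le_norm)
      ultimately have "\<bar>(Y x \<bullet> b) * (X x \<bullet> b)\<bar> \<le> norm (Y x) * norm (X x)"
        by (simp add: abs_mult mult_mono)
      also have "\<dots> \<le> (norm (X x))\<^sup>2 + (norm (Y x))\<^sup>2" using abs_prod_le[of "norm (Y x)" "norm (X x)"] by simp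
      finally show "norm ((Y x \<bullet> b) * (X x \<bullet> b)) \<le> norm ((norm (X x))\<^sup>2 + (norm (Y x))\<^sup>2)" by simp
    qed
  qed
  have i0: "integral\<^sup>L M (\<lambda>x. (Y x \<bullet> b) * (X x \<bullet> b)) = 0" if b: "b \<in> Basis" for b
  proof -
    have YbF: "(\<lambda>x. Y x \<bullet> b) \<in> borel_measurable F" using YF by measurable
    have Xb: "(\<lambda>x. X x \<bullet> b) \<in> borel_measurable M" using Xm by measurable
    have "integral\<^sup>L M (\<lambda>x. (Y x \<bullet> b) * (X x \<bullet> b)) = integral\<^sup>L M (\<lambda>x. (Y x \<bullet> b) * real_cond_exp M F (\<lambda>x. X x \<bullet> b) x)"
      using real_cond_exp_intg(2)[OF ib[OF b] YbF Xb] by simp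
    also have "\<dots> = integral\<^sup>L M (\<lambda>x. 0)"
    proof (rule integral_cong_AE)
      show "(\<lambda>x. (Y x \<bullet> b) * real_cond_exp M F (\<lambda>x. X x \<bullet> b) x) \<in> borel_measurable M"
        using Ym by measurable
      show "AE x in M. (Y x \<bullet> b) * real_cond_exp M F (\<lambda>x. X x \<bullet> b) x = 0"
      proof -
        have "AE x in M. real_cond_exp M F (\<lambda>x. X x \<bullet> b) x = 0" using ce b by blast
        then show ?thesis by eventually_elim simp
      qed
    qed simp
    finally show ?thesis by simp
  qed
  have eq: "(\<lambda>x. X x \<bullet> Y x) = (\<lambda>x. \<Sum>b\<in>Basis. (Y x \<bullet> b) * (X x \<bullet> b))"
  proof
    fix x
    have "X x \<bullet> Y x = (\<Sum>b\<in>Basis. (X x \<bullet> b) * (Y x \<bullet> b))" by (rule euclidean_inner)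
    also have "\<dots> = (\<Sum>b\<in>Basis. (Y x \<bullet> b) * (X x \<bullet> b))" by (intro sum.cong refl) (rule mult.commute)
    finally show "X x \<bullet> Y x = (\<Sum>b\<in>Basis. (Y x \<bullet> b) * (X x \<bullet> b))" .
  qed
  show "integrable M (\<lambda>x. X x \<bullet> Y x)" unfolding eq using ib by simp
  show "integral\<^sup>L M (\<lambda>x. X x \<bullet> Y x) = 0" unfolding eq using ib i0 by (simp add: integral_sum)
qed

lemma state_1: "sps_state n A B \<tau> \<rho> \<alpha> z1 w1 eps ee 1 = (z1, w1)"
  unfolding sps_state_def by simp

lemma state_1': "sps_state n A B \<tau> \<rho> \<alpha> z1 w1 eps ee (Suc 0) = (z1, w1)"
  unfolding sps_state_def by simp

lemma state_Suc:
  assumes "1 \<le> k"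
  shows "sps_state n A B \<tau> \<rho> \<alpha> z1 w1 eps ee (Suc k) =
    sps_step n A B \<tau> \<rho> \<alpha> (fst (sps_state n A B \<tau> \<rho> \<alpha> z1 w1 eps ee k)) (snd (sps_state n A B \<tau> \<rho> \<alpha> z1 w1 eps ee k)) (eps k) (ee k)"
proof -
  obtain j where k: "k = Suc j" using assms by (cases k) auto
  show ?thesis unfolding sps_state_def k by (simp split: prod.splits)
qed

lemma z_1: "sps_z n A B \<tau> \<rho> \<alpha> z1 w1 \<epsilon> e 1 \<omega> = z1" unfolding sps_z_def state_1 by simp
lemma w_1: "sps_w n A B \<tau> \<rho> \<alpha> z1 w1 \<epsilon> e 1 \<omega> = w1" unfolding sps_w_def state_1 by simp
lemma z_1': "sps_z n A B \<tau> \<rho> \<alpha> z1 w1 \<epsilon> e (Suc 0) \<omega> = z1" using z_1 by simp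
lemma w_1': "sps_w n A B \<tau> \<rho> \<alpha> z1 w1 \<epsilon> e (Suc 0) \<omega> = w1" using w_1 by simp

lemma zw_Suc:
  assumes "1 \<le> k"
  shows "sps_z n A B \<tau> \<rho> \<alpha> z1 w1 \<epsilon> e (Suc k) \<omega> = fst (sps_step n A B \<tau> \<rho> \<alpha> (sps_z n A B \<tau> \<rho> \<alpha> z1 w1 \<epsilon> e k \<omega>) (sps_w n A B \<tau> \<rho> \<alpha> z1 w1 \<epsilon> e k \<omega>) (\<epsilon> k \<omega>) (e k \<omega>))"
    "sps_w n A B \<tau> \<rho> \<alpha> z1 w1 \<epsilon> e (Suc k) \<omega> = snd (sps_step n A B \<tau> \<rho> \<alpha> (sps_z n A B \<tau> \<rho> \<alpha> z1 w1 \<epsilon> e k \<omega>) (sps_w n A B \<tau> \<rho> \<alpha> z1 w1 \<epsilon> e k \<omega>) (\<epsilon> k \<omega>) (e k \<omega>))"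
  unfolding sps_z_def sps_w_def by (simp_all add: state_Suc[OF assms])

context sps_setting
begin

lemma wsum_iter:
  assumes w1s: "(\<Sum>i=1..n+1. w1 i) = 0" and k: "1 \<le> k"
  shows "(\<Sum>i=1..n+1. sps_w n A B \<tau> \<rho> \<alpha> z1 w1 \<epsilon> e k \<omega> i) = 0"
  using k
proof (induction k)
  case 0 then show ?case by simp
next
  case (Suc k)
  show ?case
  proof (cases "k = 0")
    case True then show ?thesis using w1s by (simp add: w_1')
  next
    case False
    then have "1 \<le> k" by simp
    then show ?thesis unfolding zw_Suc(2)[OF \<open>1 \<le> k\<close>] using Suc by (intro wsum_step) simp
  qed
qed

lemma res_meas: "i \<in> {1..n} \<Longrightarrow> resolvent \<tau> (A i) \<in> borel_measurable borel"
  using A_mm tau by (intro borel_measurable_continuous_onI resolvent_continuous) auto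

lemma B_meas: "B \<in> borel_measurable borel"
  by (rule borel_measurable_continuous_onI[OF B_cont])

lemma meas_x:
  assumes zm: "zg \<in> borel_measurable M" and wm: "\<And>i. i \<in> {1..n+1} \<Longrightarrow> (\<lambda>\<omega>. wg \<omega> i) \<in> borel_measurable M"
    and em: "eg \<in> borel_measurable M" and i: "i \<in> {1..n+1}"
  shows "(\<lambda>\<omega>. sps_x n A B \<tau> \<rho> (zg \<omega>) (wg \<omega>) (eg \<omega>) i) \<in> borel_measurable M"
proof (cases "i \<le> n")
  case True
  then have i': "i \<in> {1..n}" using i by simp
  have "(\<lambda>\<omega>. sps_x n A B \<tau> \<rho> (zg \<omega>) (wg \<omega>) (eg \<omega>) i) = (\<lambda>\<omega>. resolvent \<tau> (A i) (zg \<omega> + \<tau> *\<^sub>R wg \<omega> i))"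
    using True by (simp add: sps_x_def)
  also have "\<dots> \<in> borel_measurable M"
    using measurable_compose[OF _ res_meas[OF i']] zm wm[OF i] by measurable
  finally show ?thesis .
next
  case False
  then have "i = n+1" using i by simp
  have "(\<lambda>\<omega>. sps_x n A B \<tau> \<rho> (zg \<omega>) (wg \<omega>) (eg \<omega>) i) = (\<lambda>\<omega>. zg \<omega> - \<rho> *\<^sub>R ((B (zg \<omega>) + eg \<omega>) - wg \<omega> (n + 1)))"
    using False by (simp add: sps_x_def)
  also have "\<dots> \<in> borel_measurable M"
    using measurable_compose[OF zm B_meas] zm wm[of "n+1"] em by measurable
  finally show ?thesis .
qed

lemma meas_y:
  assumes zm: "zg \<in> borel_measurable M" and wm: "\<And>i. i \<in> {1..n+1} \<Longrightarrow> (\<lambda>\<omega>. wg \<omega> i) \<in> borel_measurable M"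
    and em: "eg \<in> borel_measurable M" and eem: "eeg \<in> borel_measurable M" and i: "i \<in> {1..n+1}"
  shows "(\<lambda>\<omega>. sps_y n A B \<tau> \<rho> (zg \<omega>) (wg \<omega>) (eg \<omega>) (eeg \<omega>) i) \<in> borel_measurable M"
proof -
  note xm = meas_x[OF zm wm em i]
  show ?thesis
  proof (cases "i \<le> n")
    case True
    have "(\<lambda>\<omega>. sps_y n A B \<tau> \<rho> (zg \<omega>) (wg \<omega>) (eg \<omega>) (eeg \<omega>) i) = (\<lambda>\<omega>. (1 / \<tau>) *\<^sub>R ((zg \<omega> + \<tau> *\<^sub>R wg \<omega> i) - sps_x n A B \<tau> \<rho> (zg \<omega>) (wg \<omega>) (eg \<omega>) i))"
      using True by (simp add: sps_y_def)
    also have "\<dots> \<in> borel_measurable M" using zm wm[OF i] xm by measurable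
    finally show ?thesis .
  next
    case False
    then have ni: "i = n+1" using i by simp
    have "(\<lambda>\<omega>. sps_y n A B \<tau> \<rho> (zg \<omega>) (wg \<omega>) (eg \<omega>) (eeg \<omega>) i) = (\<lambda>\<omega>. B (sps_x n A B \<tau> \<rho> (zg \<omega>) (wg \<omega>) (eg \<omega>) (n+1)) + eeg \<omega>)"
      using False by (simp add: sps_y_def)
    also have "\<dots> \<in> borel_measurable M" using measurable_compose[OF xm[unfolded ni] B_meas] eem by measurable
    finally show ?thesis .
  qed
qed

lemma meas_step:
  assumes zm: "zg \<in> borel_measurable M" and wm: "\<And>i. i \<in> {1..n+1} \<Longrightarrow> (\<lambda>\<omega>. wg \<omega> i) \<in> borel_measurable M"
    and em: "eg \<in> borel_measurable M" and eem: "eeg \<in> borel_measurable M"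
  shows "(\<lambda>\<omega>. fst (sps_step n A B \<tau> \<rho> \<alpha> (zg \<omega>) (wg \<omega>) (eg \<omega>) (eeg \<omega>))) \<in> borel_measurable M"
    "\<And>i. i \<in> {1..n+1} \<Longrightarrow> (\<lambda>\<omega>. snd (sps_step n A B \<tau> \<rho> \<alpha> (zg \<omega>) (wg \<omega>) (eg \<omega>) (eeg \<omega>)) i) \<in> borel_measurable M"
proof -
  have ym: "(\<lambda>\<omega>. \<Sum>i=1..n+1. sps_y n A B \<tau> \<rho> (zg \<omega>) (wg \<omega>) (eg \<omega>) (eeg \<omega>) i) \<in> borel_measurable M"
    by (intro borel_measurable_sum meas_y[OF zm wm em eem]) auto
  have xm: "(\<lambda>\<omega>. \<Sum>i=1..n+1. sps_x n A B \<tau> \<rho> (zg \<omega>) (wg \<omega>) (eg \<omega>) i) \<in> borel_measurable M"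
    by (intro borel_measurable_sum meas_x[OF zm wm em]) auto
  show "(\<lambda>\<omega>. fst (sps_step n A B \<tau> \<rho> \<alpha> (zg \<omega>) (wg \<omega>) (eg \<omega>) (eeg \<omega>))) \<in> borel_measurable M"
    unfolding sps_step_def fst_conv using zm ym by measurable
  fix i assume i: "i \<in> {1..n+1}"
  show "(\<lambda>\<omega>. snd (sps_step n A B \<tau> \<rho> \<alpha> (zg \<omega>) (wg \<omega>) (eg \<omega>) (eeg \<omega>)) i) \<in> borel_measurable M"
    unfolding sps_step_def snd_conv using wm[OF i] meas_x[OF zm wm em i] xm by measurable
qed

lemma meas_iter:
  assumes em: "\<And>j. j \<in> {1..K} \<Longrightarrow> \<epsilon> j \<in> borel_measurable M \<and> e j \<in> borel_measurable M"
  shows "k \<in> {1..K+1} \<Longrightarrow> sps_z n A B \<tau> \<rho> \<alpha> z1 w1 \<epsilon> e k \<in> borel_measurable M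
     \<and> (\<forall>i\<in>{1..n+1}. (\<lambda>\<omega>. sps_w n A B \<tau> \<rho> \<alpha> z1 w1 \<epsilon> e k \<omega> i) \<in> borel_measurable M)"
proof (induction k)
  case 0 then show ?case by simp
next
  case (Suc k)
  show ?case
  proof (cases "k = 0")
    case True then show ?thesis by (simp add: sps_z_def sps_w_def state_1')
  next
    case False
    then have k1: "1 \<le> k" by simp
    have IH: "sps_z n A B \<tau> \<rho> \<alpha> z1 w1 \<epsilon> e k \<in> borel_measurable M"
      "\<And>i. i \<in> {1..n+1} \<Longrightarrow> (\<lambda>\<omega>. sps_w n A B \<tau> \<rho> \<alpha> z1 w1 \<epsilon> e k \<omega> i) \<in> borel_measurable M"
      using Suc k1 by auto
    have kK: "k \<in> {1..K}" using Suc.prems k1 by simp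
    note ms = meas_step[OF IH(1) IH(2) conjunct1[OF em[OF kK]] conjunct2[OF em[OF kK]], where \<alpha>=\<alpha>]
    have "sps_z n A B \<tau> \<rho> \<alpha> z1 w1 \<epsilon> e (Suc k) = (\<lambda>\<omega>. fst (sps_step n A B \<tau> \<rho> \<alpha> (sps_z n A B \<tau> \<rho> \<alpha> z1 w1 \<epsilon> e k \<omega>) (sps_w n A B \<tau> \<rho> \<alpha> z1 w1 \<epsilon> e k \<omega>) (\<epsilon> k \<omega>) (e k \<omega>)))"
      by (intro ext) (rule zw_Suc(1)[OF k1])
    moreover have "(\<lambda>\<omega>. sps_w n A B \<tau> \<rho> \<alpha> z1 w1 \<epsilon> e (Suc k) \<omega> i) = (\<lambda>\<omega>. snd (sps_step n A B \<tau> \<rho> \<alpha> (sps_z n A B \<tau> \<rho> \<alpha> z1 w1 \<epsilon> e k \<omega>) (sps_w n A B \<tau> \<rho> \<alpha> z1 w1 \<epsilon> e k \<omega>) (\<epsilon> k \<omega>) (e k \<omega>)) i)" for i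
      by (intro ext) (simp only: zw_Suc(2)[OF k1])
    ultimately show ?thesis using ms by simp
  qed
qed

end

locale sps_prob = sps_setting n A B \<tau> L zs ws
  for n :: nat and A :: "nat \<Rightarrow> 'a::euclidean_space \<Rightarrow> 'a set" and B :: "'a \<Rightarrow> 'a"
    and \<tau> L :: real and zs :: 'a and ws :: "nat \<Rightarrow> 'a" +
  fixes M :: "'m measure" and \<epsilon> e :: "nat \<Rightarrow> 'm \<Rightarrow> 'a" and K :: nat and \<rho> \<alpha> Cf N1 N2 N3 N4 :: real
    and z1 :: 'a and w1 :: "nat \<Rightarrow> 'a"
  assumes P: "prob_space M" and K1: "1 \<le> K"
    and rho: "0 < \<rho>" "\<rho> \<le> 1" "L * \<rho> \<le> 1/2" "\<rho> ^ 4 \<le> 1 / real K"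
    and alpha: "\<alpha> = Cf * \<rho>\<^sup>2" and Cf: "0 < Cf"
    and N: "0 \<le> N1" "0 \<le> N2" "0 \<le> N3" "0 \<le> N4"
    and w1s: "(\<Sum>i=1..n+1. w1 i) = 0"
    and hyp: "\<forall>k\<in>{1..K}.
          \<epsilon> k \<in> borel_measurable M \<and> e k \<in> borel_measurable M \<and>
          integrable M (\<epsilon> k) \<and> integrable M (e k) \<and>
          (\<forall>b\<in>Basis. AE \<omega> in M.
             real_cond_exp M (sps_F M n A B \<tau> \<rho> \<alpha> z1 w1 \<epsilon> e k) (\<lambda>\<omega>. \<epsilon> k \<omega> \<bullet> b) \<omega> = 0) \<and>
          (\<forall>b\<in>Basis. AE \<omega> in M.
             real_cond_exp M (sps_F M n A B \<tau> \<rho> \<alpha> z1 w1 \<epsilon> e k) (\<lambda>\<omega>. e k \<omega> \<bullet> b) \<omega> = 0) \<and>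
          (AE \<omega> in M.
             nn_cond_exp M (sps_F M n A B \<tau> \<rho> \<alpha> z1 w1 \<epsilon> e k)
               (\<lambda>\<omega>. ennreal ((norm (\<epsilon> k \<omega>))\<^sup>2)) \<omega>
             \<le> ennreal (N1 + N2 * (norm (B (sps_z n A B \<tau> \<rho> \<alpha> z1 w1 \<epsilon> e k \<omega>)))\<^sup>2)) \<and>
          (AE \<omega> in M.
             nn_cond_exp M (sps_FE M n A B \<tau> \<rho> \<alpha> z1 w1 \<epsilon> e k)
               (\<lambda>\<omega>. ennreal ((norm (e k \<omega>))\<^sup>2)) \<omega>
             \<le> ennreal (N3 + N4 * (norm (B (sps_x n A B \<tau> \<rho>
                   (sps_z n A B \<tau> \<rho> \<alpha> z1 w1 \<epsilon> e k \<omega>) (sps_w n A B \<tau> \<rho> \<alpha> z1 w1 \<epsilon> e k \<omega>)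
                   (\<epsilon> k \<omega>) (n + 1))))\<^sup>2))"
begin

abbreviation "Z \<equiv> sps_z n A B \<tau> \<rho> \<alpha> z1 w1 \<epsilon> e"
abbreviation "W \<equiv> sps_w n A B \<tau> \<rho> \<alpha> z1 w1 \<epsilon> e"
abbreviation "FF \<equiv> sps_F M n A B \<tau> \<rho> \<alpha> z1 w1 \<epsilon> e"
abbreviation "FE \<equiv> sps_FE M n A B \<tau> \<rho> \<alpha> z1 w1 \<epsilon> e"

definition "Vk k = (\<lambda>\<omega>. Vf n zs ws (Z k \<omega>) (W k \<omega>))"
definition "Obj k = (\<lambda>\<omega>. Of n A B \<tau> \<rho> (Z k \<omega>) (W k \<omega>) (\<epsilon> k \<omega>) (e k \<omega>))"

lemma alpha_nn: "0 \<le> \<alpha>" unfolding alpha using Cf by simp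

lemma eps_meas: "k \<in> {1..K} \<Longrightarrow> \<epsilon> k \<in> borel_measurable M" using hyp by blast
lemma e_meas: "k \<in> {1..K} \<Longrightarrow> e k \<in> borel_measurable M" using hyp by blast

lemma ZW_meas:
  assumes "k \<in> {1..K+1}"
  shows "Z k \<in> borel_measurable M" "\<And>i. i \<in> {1..n+1} \<Longrightarrow> (\<lambda>\<omega>. W k \<omega> i) \<in> borel_measurable M"
  using meas_iter[where K=K and \<epsilon>=\<epsilon> and M=M and e=e and \<rho>=\<rho> and \<alpha>=\<alpha> and k=k] eps_meas e_meas assms by blast+

lemma gens_meas:
  assumes k: "k \<in> {1..K}"
  shows "\<And>f. f \<in> {Z j | j. 1 \<le> j \<and> j \<le> k} \<union>
      {(\<lambda>\<omega>. W j \<omega> i) | j i. 1 \<le> j \<and> j \<le> k \<and> 1 \<le> i \<and> i \<le> n + 1} \<Longrightarrow> f \<in> borel_measurable M"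
  using k ZW_meas by fastforce

lemma F_props:
  assumes k: "k \<in> {1..K}"
  shows "subalgebra M (FF k)" "Z k \<in> borel_measurable (FF k)"
    "\<And>i. i \<in> {1..n+1} \<Longrightarrow> (\<lambda>\<omega>. W k \<omega> i) \<in> borel_measurable (FF k)"
proof -
  note sg = sigma_gen_subalg[of _ M, OF gens_meas[OF k]]
  show "subalgebra M (FF k)" unfolding sps_F_def by (rule sg(1))
  show "Z k \<in> borel_measurable (FF k)" unfolding sps_F_def using k by (intro sg(2)) auto
  fix i assume "i \<in> {1..n+1}"
  then show "(\<lambda>\<omega>. W k \<omega> i) \<in> borel_measurable (FF k)" unfolding sps_F_def using k
    by (intro sg(2)) auto
qed

lemma FE_props:
  assumes k: "k \<in> {1..K}"
  shows "subalgebra M (FE k)"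
proof -
  have "\<And>f. f \<in> {Z j | j. 1 \<le> j \<and> j \<le> k} \<union>
      {(\<lambda>\<omega>. W j \<omega> i) | j i. 1 \<le> j \<and> j \<le> k \<and> 1 \<le> i \<and> i \<le> n + 1} \<union> {\<epsilon> k} \<Longrightarrow> f \<in> borel_measurable M"
    using gens_meas[OF k] eps_meas[OF k] by blast
  note sg = sigma_gen_subalg[of _ M, OF this]
  show "subalgebra M (FE k)" unfolding sps_FE_def by (rule sg(1))
qed

end

lemma integrable_le:
  fixes f g :: "'m \<Rightarrow> real"
  assumes "integrable M g" "f \<in> borel_measurable M" "\<And>x. 0 \<le> f x" "\<And>x. f x \<le> g x"
  shows "integrable M f"
proof (rule Bochner_Integration.integrable_bound[OF assms(1,2)])
  show "AE x in M. norm (f x) \<le> norm (g x)"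
    using assms(3,4) by (intro AE_I2) (smt (verit) real_norm_def)
qed

sublocale sps_prob \<subseteq> PS: prob_space M by (rule P)

context sps_prob
begin

lemma prob1[simp]: "measure M (space M) = 1" by (rule PS.prob_space)

lemma int_const_i[simp]: "integrable M (\<lambda>x. c::real)" by simp

lemma int_const: "integral\<^sup>L M (\<lambda>x. c) = (c::real)"
  using prob_space.prob_space[OF P] by simp

definition "a1 = 2 * N2 * L\<^sup>2"
definition "a2 = N1 + 2 * N2 * (norm (B zs))\<^sup>2"
definition "a3 = 2 * N4 * Kc\<^sup>2 * (1 + a1)"
definition "a4 = N3 + N4 * (2 * Kc\<^sup>2 * a2 + 2 * (norm (B zs))\<^sup>2)"
definition "Pc = 2 * L * Cf * a1 + Cf\<^sup>2 * Cg * (1 + a1 + a3)"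
definition "Qc = 2 * L * Cf * a2 + Cf\<^sup>2 * Cg * (a2 + a4)"

lemma Cg_nn: "0 \<le> Cg" unfolding Cg_def by simp
lemma a_nn: "0 \<le> a1" "0 \<le> a2" "0 \<le> a3" "0 \<le> a4"
  unfolding a1_def a2_def a3_def a4_def using N by auto
lemma PQ_nn: "0 \<le> Pc" "0 \<le> Qc"
  unfolding Pc_def Qc_def using a_nn Cg_nn Cf L_pos by auto

lemma Vk_meas: "k \<in> {1..K+1} \<Longrightarrow> Vk k \<in> borel_measurable M"
proof -
  assume k: "k \<in> {1..K+1}"
  note m1 = ZW_meas(1)[OF k] and m2 = ZW_meas(2)[OF k]
  have "(\<lambda>\<omega>. \<Sum>i=1..n+1. (norm (W k \<omega> i - ws i))\<^sup>2) \<in> borel_measurable M"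
    by (intro borel_measurable_sum) (use m2 in measurable)
  then show ?thesis unfolding Vk_def Vf_def using m1 by measurable
qed

lemma Vk_nn: "0 \<le> Vk k \<omega>" unfolding Vk_def by (rule Vf_ge(3))


lemma one_step:
  assumes k: "k \<in> {1..K}" and Vi: "integrable M (Vk k)"
  shows "integrable M (Vk (Suc k))" "integrable M (Obj k)"
    "integral\<^sup>L M (Vk (Suc k)) + 2 * \<alpha> * c0 * \<rho> * integral\<^sup>L M (Obj k)
       \<le> (1 + Pc / real K) * integral\<^sup>L M (Vk k) + Qc / real K"
proof -
  have k1: "k \<in> {1..K+1}" and k2: "Suc k \<in> {1..K+1}" and kge: "1 \<le> k" using k by auto
  note Zm = ZW_meas(1)[OF k1] and Wm = ZW_meas(2)[OF k1]
  note em = eps_meas[OF k] and eem = e_meas[OF k]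
  note Fp = F_props[OF k] and FEs = FE_props[OF k]
  have hk: "(\<forall>b\<in>Basis. AE \<omega> in M. real_cond_exp M (FF k) (\<lambda>\<omega>. \<epsilon> k \<omega> \<bullet> b) \<omega> = 0)"
      "(\<forall>b\<in>Basis. AE \<omega> in M. real_cond_exp M (FF k) (\<lambda>\<omega>. e k \<omega> \<bullet> b) \<omega> = 0)"
      "AE \<omega> in M. nn_cond_exp M (FF k) (\<lambda>\<omega>. ennreal ((norm (\<epsilon> k \<omega>))\<^sup>2)) \<omega>
             \<le> ennreal (N1 + N2 * (norm (B (Z k \<omega>)))\<^sup>2)"
      "AE \<omega> in M. nn_cond_exp M (FE k) (\<lambda>\<omega>. ennreal ((norm (e k \<omega>))\<^sup>2)) \<omega>
             \<le> ennreal (N3 + N4 * (norm (B (sps_x n A B \<tau> \<rho> (Z k \<omega>) (W k \<omega>) (\<epsilon> k \<omega>) (n + 1))))\<^sup>2)"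
    using hyp k by blast+
  have Vm: "Vk k \<in> borel_measurable M" by (rule Vk_meas[OF k1])
  have V0: "\<And>\<omega>. 0 \<le> Vk k \<omega>" by (rule Vk_nn)
  define EV where "EV = integral\<^sup>L M (Vk k)"
  have EV0: "0 \<le> EV" unfolding EV_def using V0 by (intro integral_nonneg_AE) auto
  define fBz where "fBz = (\<lambda>\<omega>. (norm (B (Z k \<omega>)))\<^sup>2)"
  have fBz_m: "fBz \<in> borel_measurable M" unfolding fBz_def
    using measurable_compose[OF Zm B_meas] by measurable
  have fBz_le: "fBz \<omega> \<le> 2 * L\<^sup>2 * Vk k \<omega> + 2 * (norm (B zs))\<^sup>2" for \<omega>
    unfolding fBz_def Vk_def by (rule Bz_bound)
  have fBz_i: "integrable M fBz"
    by (rule integrable_le[OF _ fBz_m _ fBz_le]) (use Vi in \<open>auto simp: fBz_def\<close>)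
  have EBz: "integral\<^sup>L M fBz \<le> 2 * L\<^sup>2 * EV + 2 * (norm (B zs))\<^sup>2"
  proof -
    have "integral\<^sup>L M fBz \<le> integral\<^sup>L M (\<lambda>\<omega>. 2 * L\<^sup>2 * Vk k \<omega> + 2 * (norm (B zs))\<^sup>2)"
      by (rule integral_mono[OF fBz_i _ fBz_le]) (use Vi in auto)
    also have "\<dots> = 2 * L\<^sup>2 * EV + 2 * (norm (B zs))\<^sup>2" unfolding EV_def using Vi by (simp add: int_const)
    finally show ?thesis .
  qed
  define fe where "fe = (\<lambda>\<omega>. (norm (\<epsilon> k \<omega>))\<^sup>2)"
  have fe_m: "fe \<in> borel_measurable M" unfolding fe_def using em by measurable
  have ge_i: "integrable M (\<lambda>\<omega>. N1 + N2 * fBz \<omega>)" using fBz_i by simp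
  note cb1 = cond_nn_bound[OF P Fp(1) fe_m _ ge_i, unfolded fe_def fBz_def]
  have fe_i: "integrable M fe" unfolding fe_def
    by (rule cb1(1)) (use N hk(3) in auto)
  have Efe: "integral\<^sup>L M fe \<le> a1 * EV + a2"
  proof -
    have "integral\<^sup>L M fe \<le> integral\<^sup>L M (\<lambda>\<omega>. N1 + N2 * fBz \<omega>)" unfolding fe_def fBz_def
      by (rule cb1(2)) (use N hk(3) in auto)
    also have "\<dots> = N1 + N2 * integral\<^sup>L M fBz" using fBz_i by (simp add: int_const)
    also have "\<dots> \<le> N1 + N2 * (2 * L\<^sup>2 * EV + 2 * (norm (B zs))\<^sup>2)" using EBz N by (simp add: mult_left_mono)
    also have "\<dots> = a1 * EV + a2" unfolding a1_def a2_def by (simp add: algebra_simps)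
    finally show ?thesis .
  qed
  define xl where "xl = (\<lambda>\<omega>. sps_x n A B \<tau> \<rho> (Z k \<omega>) (W k \<omega>) (\<epsilon> k \<omega>) (n + 1))"
  have xl_m: "xl \<in> borel_measurable M" unfolding xl_def by (rule meas_x[OF Zm Wm em]) auto
  define fBx where "fBx = (\<lambda>\<omega>. (norm (B (xl \<omega>)))\<^sup>2)"
  have fBx_m: "fBx \<in> borel_measurable M" unfolding fBx_def
    using measurable_compose[OF xl_m B_meas] by measurable
  have fBx_le: "fBx \<omega> \<le> 2 * Kc\<^sup>2 * (Vk k \<omega> + fe \<omega>) + 2 * (norm (B zs))\<^sup>2" for \<omega>
    unfolding fBx_def Vk_def fe_def xl_def by (rule Bx_bound[OF rho(1,2)])
  have fBx_i: "integrable M fBx"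
    by (rule integrable_le[OF _ fBx_m _ fBx_le]) (use Vi fe_i in \<open>auto simp: fBx_def\<close>)
  define fee where "fee = (\<lambda>\<omega>. (norm (e k \<omega>))\<^sup>2)"
  have fee_m: "fee \<in> borel_measurable M" unfolding fee_def using eem by measurable
  have gee_i: "integrable M (\<lambda>\<omega>. N3 + N4 * fBx \<omega>)" using fBx_i by simp
  note cb2 = cond_nn_bound[OF P FEs fee_m _ gee_i, unfolded fee_def fBx_def xl_def]
  have fee_i: "integrable M fee" unfolding fee_def
    by (rule cb2(1)) (use N hk(4) in auto)
  have Efee: "integral\<^sup>L M fee \<le> a3 * EV + a4"
  proof -
    have "integral\<^sup>L M fee \<le> integral\<^sup>L M (\<lambda>\<omega>. N3 + N4 * fBx \<omega>)" unfolding fee_def fBx_def xl_def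
      by (rule cb2(2)) (use N hk(4) in auto)
    also have "\<dots> = N3 + N4 * integral\<^sup>L M fBx" using fBx_i by (simp add: int_const)
    also have "integral\<^sup>L M fBx \<le> integral\<^sup>L M (\<lambda>\<omega>. 2 * Kc\<^sup>2 * (Vk k \<omega> + fe \<omega>) + 2 * (norm (B zs))\<^sup>2)"
      by (rule integral_mono[OF fBx_i _ fBx_le]) (use Vi fe_i in auto)
    also have "\<dots> = 2 * Kc\<^sup>2 * (EV + integral\<^sup>L M fe) + 2 * (norm (B zs))\<^sup>2"
      unfolding EV_def using Vi fe_i by (simp add: int_const)
    also have "\<dots> \<le> 2 * Kc\<^sup>2 * (EV + (a1 * EV + a2)) + 2 * (norm (B zs))\<^sup>2"
      using Efe by (simp add: mult_left_mono)
    finally have "integral\<^sup>L M fee \<le> N3 + N4 * (2 * Kc\<^sup>2 * (EV + (a1 * EV + a2)) + 2 * (norm (B zs))\<^sup>2)"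
      using N(4) by (simp add: mult_left_mono)
    also have "\<dots> = a3 * EV + a4" unfolding a3_def a4_def by (simp add: algebra_simps)
    finally show ?thesis .
  qed
  define xx where "xx = (\<lambda>\<omega>. sps_x n A B \<tau> \<rho> (Z k \<omega>) (W k \<omega>) (\<epsilon> k \<omega>))"
  define yy where "yy = (\<lambda>\<omega>. sps_y n A B \<tau> \<rho> (Z k \<omega>) (W k \<omega>) (\<epsilon> k \<omega>) (e k \<omega>))"
  define xbar where "xbar = (\<lambda>\<omega>. (1 / real (n + 1)) *\<^sub>R (\<Sum>j=1..n+1. xx \<omega> j))"
  define GG where "GG = (\<lambda>\<omega>. (norm (\<Sum>i=1..n+1. yy \<omega> i))\<^sup>2 + (\<Sum>i=1..n+1. (norm (xx \<omega> i - xbar \<omega>))\<^sup>2))"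
  have xx_m: "\<And>i. i \<in> {1..n+1} \<Longrightarrow> (\<lambda>\<omega>. xx \<omega> i) \<in> borel_measurable M"
    unfolding xx_def by (rule meas_x[OF Zm Wm em])
  have yy_m: "\<And>i. i \<in> {1..n+1} \<Longrightarrow> (\<lambda>\<omega>. yy \<omega> i) \<in> borel_measurable M"
    unfolding yy_def by (rule meas_y[OF Zm Wm em eem])
  have xbar_m: "xbar \<in> borel_measurable M" unfolding xbar_def
    by (intro borel_measurable_scaleR borel_measurable_const borel_measurable_sum xx_m)
  have GG_m: "GG \<in> borel_measurable M" unfolding GG_def
  proof (intro borel_measurable_add borel_measurable_sum)
    show "(\<lambda>\<omega>. (norm (\<Sum>i=1..n+1. yy \<omega> i))\<^sup>2) \<in> borel_measurable M"
      using borel_measurable_sum[of "{1..n+1}" "\<lambda>i \<omega>. yy \<omega> i" M] yy_m by measurable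
    fix i assume "i \<in> {1..n+1}"
    then show "(\<lambda>\<omega>. (norm (xx \<omega> i - xbar \<omega>))\<^sup>2) \<in> borel_measurable M"
      using xx_m xbar_m by measurable
  qed
  have GG_le: "GG \<omega> \<le> Cg * (Vk k \<omega> + fe \<omega> + fee \<omega>)" for \<omega>
    unfolding GG_def Vk_def fe_def fee_def xbar_def xx_def yy_def by (rule G_bound[OF rho(1,2)])
  have GG_nn: "0 \<le> GG \<omega>" for \<omega> unfolding GG_def by (intro add_nonneg_nonneg sum_nonneg) auto
  have GG_i: "integrable M GG"
    by (rule integrable_le[OF _ GG_m GG_nn GG_le]) (use Vi fe_i fee_i in auto)
  have EG: "integral\<^sup>L M GG \<le> Cg * (EV + integral\<^sup>L M fe + integral\<^sup>L M fee)"
  proof -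
    have "integral\<^sup>L M GG \<le> integral\<^sup>L M (\<lambda>\<omega>. Cg * (Vk k \<omega> + fe \<omega> + fee \<omega>))"
      by (rule integral_mono[OF GG_i _ GG_le]) (use Vi fe_i fee_i in auto)
    also have "\<dots> = Cg * (EV + integral\<^sup>L M fe + integral\<^sup>L M fee)"
      unfolding EV_def using Vi fe_i fee_i by simp
    finally show ?thesis .
  qed
  have wsk: "\<And>\<omega>. (\<Sum>i=1..n+1. W k \<omega> i) = 0" by (rule wsum_iter[OF w1s kge])
  have Vnext: "Vk (Suc k) \<omega> = Vf n zs ws (fst (sps_step n A B \<tau> \<rho> \<alpha> (Z k \<omega>) (W k \<omega>) (\<epsilon> k \<omega>) (e k \<omega>)))
      (snd (sps_step n A B \<tau> \<rho> \<alpha> (Z k \<omega>) (W k \<omega>) (\<epsilon> k \<omega>) (e k \<omega>)))" for \<omega>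
    unfolding Vk_def zw_Suc[OF kge] ..
  have Vn_le: "Vk (Suc k) \<omega> \<le> 2 * Vk k \<omega> + 2 * \<alpha>\<^sup>2 * GG \<omega>" for \<omega>
    unfolding Vnext unfolding Vk_def GG_def xbar_def xx_def yy_def by (rule Vnext_bound)
  show Vni: "integrable M (Vk (Suc k))"
    by (rule integrable_le[OF _ Vk_meas[OF k2] Vk_nn Vn_le]) (use Vi GG_i in auto)
  have Om: "Obj k \<in> borel_measurable M"
  proof -
    have s1: "(\<lambda>\<omega>. \<Sum>i=1..n. (norm (yy \<omega> i - W k \<omega> i))\<^sup>2) \<in> borel_measurable M"
    proof (intro borel_measurable_sum)
      fix i assume "i \<in> {1..n}"
      then have i: "i \<in> {1..n+1}" by simp
      show "(\<lambda>\<omega>. (norm (yy \<omega> i - W k \<omega> i))\<^sup>2) \<in> borel_measurable M" using yy_m[OF i] Wm[OF i] by measurable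
    qed
    have s2: "(\<lambda>\<omega>. \<Sum>i=1..n. (norm (Z k \<omega> - xx \<omega> i))\<^sup>2) \<in> borel_measurable M"
    proof (intro borel_measurable_sum)
      fix i assume "i \<in> {1..n}"
      then have i: "i \<in> {1..n+1}" by simp
      show "(\<lambda>\<omega>. (norm (Z k \<omega> - xx \<omega> i))\<^sup>2) \<in> borel_measurable M" using xx_m[OF i] Zm by measurable
    qed
    have s3: "(\<lambda>\<omega>. (norm (B (Z k \<omega>) - W k \<omega> (n + 1)))\<^sup>2) \<in> borel_measurable M"
      using measurable_compose[OF Zm B_meas] Wm[of "n+1"] by measurable
    have "Obj k = (\<lambda>\<omega>. (\<Sum>i=1..n. (norm (yy \<omega> i - W k \<omega> i))\<^sup>2) + (\<Sum>i=1..n. (norm (Z k \<omega> - xx \<omega> i))\<^sup>2)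
        + (norm (B (Z k \<omega>) - W k \<omega> (n + 1)))\<^sup>2)"
      unfolding Obj_def Of_def xx_def yy_def ..
    then show ?thesis using s1 s2 s3 by simp
  qed
  have O_nn: "0 \<le> Obj k \<omega>" for \<omega> unfolding Obj_def Of_def by (intro add_nonneg_nonneg sum_nonneg) auto
  have O_le: "Obj k \<omega> \<le> Co * (Vk k \<omega> + fe \<omega>)" for \<omega>
    unfolding Obj_def Vk_def fe_def by (rule O_bound[OF rho(1,2)])
  show Oi: "integrable M (Obj k)"
    by (rule integrable_le[OF _ Om O_nn O_le]) (use Vi fe_i in auto)
  define uu where "uu = (\<lambda>\<omega>. B (Z k \<omega>) - W k \<omega> (n + 1))"
  have uuF: "uu \<in> borel_measurable (FF k)" unfolding uu_def
    using measurable_compose[OF Fp(2) B_meas] Fp(3)[of "n+1"] by measurable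
  have uu_le: "(norm (uu \<omega>))\<^sup>2 \<le> Obj k \<omega>" for \<omega>
  proof -
    have "0 \<le> (\<Sum>i=1..n. (norm (yy \<omega> i - W k \<omega> i))\<^sup>2) + (\<Sum>i=1..n. (norm (Z k \<omega> - xx \<omega> i))\<^sup>2)"
      by (intro add_nonneg_nonneg sum_nonneg) auto
    then show ?thesis unfolding Obj_def Of_def uu_def xx_def yy_def by simp
  qed
  have uu_i: "integrable M (\<lambda>\<omega>. (norm (uu \<omega>))\<^sup>2)"
    by (rule integrable_le[OF Oi _ _ uu_le]) (use measurable_from_subalg[OF Fp(1) uuF] in auto)
  note cz1 = cond_zero_inner[OF P Fp(1) em uuF fe_i[unfolded fe_def] uu_i hk(1)]
  define dz where "dz = (\<lambda>\<omega>. Z k \<omega> - zs)"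
  have dzF: "dz \<in> borel_measurable (FF k)" unfolding dz_def using Fp(2) by measurable
  have dz_le: "(norm (dz \<omega>))\<^sup>2 \<le> Vk k \<omega>" for \<omega> unfolding dz_def Vk_def by (rule Vf_ge(1))
  have dz_i: "integrable M (\<lambda>\<omega>. (norm (dz \<omega>))\<^sup>2)"
    by (rule integrable_le[OF Vi _ _ dz_le]) (use measurable_from_subalg[OF Fp(1) dzF] in auto)
  note cz2 = cond_zero_inner[OF P Fp(1) eem dzF fee_i[unfolded fee_def] dz_i hk(2)]
  define c1 where "c1 = 2 * \<alpha> * \<rho> * (1 - 2 * L * \<rho>)"
  define c2 where "c2 = 2 * \<alpha> * L * \<rho>\<^sup>2"
  have pw: "Vk (Suc k) \<omega> + (2 * \<alpha> * c0 * \<rho>) * Obj k \<omega>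
      \<le> Vk k \<omega> - c1 * (\<epsilon> k \<omega> \<bullet> uu \<omega>) + c2 * fe \<omega> - (2 * \<alpha>) * (e k \<omega> \<bullet> dz \<omega>) + \<alpha>\<^sup>2 * GG \<omega>" for \<omega>
  proof -
    note si = step_ineq[OF rho(1,2,3) alpha_nn wsk[of \<omega>], where eps="\<epsilon> k \<omega>" and ee="e k \<omega>" and z="Z k \<omega>"]
    show ?thesis unfolding Vnext unfolding Vk_def Obj_def c1_def c2_def fe_def uu_def dz_def GG_def xbar_def xx_def yy_def
      using si by (simp add: inner_commute mult.assoc)
  qed
  have "integral\<^sup>L M (\<lambda>\<omega>. Vk (Suc k) \<omega> + (2 * \<alpha> * c0 * \<rho>) * Obj k \<omega>)
      \<le> integral\<^sup>L M (\<lambda>\<omega>. Vk k \<omega> - c1 * (\<epsilon> k \<omega> \<bullet> uu \<omega>) + c2 * fe \<omega> - (2 * \<alpha>) * (e k \<omega> \<bullet> dz \<omega>) + \<alpha>\<^sup>2 * GG \<omega>)"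
    by (rule integral_mono[OF _ _ pw]) (use Vni Oi Vi cz1(1) fe_i cz2(1) GG_i in auto)
  also have "integral\<^sup>L M (\<lambda>\<omega>. Vk (Suc k) \<omega> + (2 * \<alpha> * c0 * \<rho>) * Obj k \<omega>)
      = integral\<^sup>L M (Vk (Suc k)) + 2 * \<alpha> * c0 * \<rho> * integral\<^sup>L M (Obj k)"
    using Vni Oi by simp
  also have "integral\<^sup>L M (\<lambda>\<omega>. Vk k \<omega> - c1 * (\<epsilon> k \<omega> \<bullet> uu \<omega>) + c2 * fe \<omega> - (2 * \<alpha>) * (e k \<omega> \<bullet> dz \<omega>) + \<alpha>\<^sup>2 * GG \<omega>)
      = EV + c2 * integral\<^sup>L M fe + \<alpha>\<^sup>2 * integral\<^sup>L M GG"
    unfolding EV_def using Vi cz1 fe_i cz2 GG_i by simp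
  finally have main: "integral\<^sup>L M (Vk (Suc k)) + 2 * \<alpha> * c0 * \<rho> * integral\<^sup>L M (Obj k)
      \<le> EV + c2 * integral\<^sup>L M fe + \<alpha>\<^sup>2 * integral\<^sup>L M GG" .
  have Kpos: "0 < real K" using K1 by simp
  have r4: "\<rho> ^ 4 \<le> 1 / real K" by (rule rho(4))
  have c2b: "c2 \<le> 2 * L * Cf / real K"
  proof -
    have "c2 = 2 * L * Cf * \<rho> ^ 4" unfolding c2_def alpha by (simp add: power2_eq_square power4_eq_xxxx)
    also have "\<dots> \<le> 2 * L * Cf * (1 / real K)" using r4 L_pos Cf by (intro mult_left_mono) auto
    finally show ?thesis by simp
  qed
  have a2b: "\<alpha>\<^sup>2 \<le> Cf\<^sup>2 / real K"
  proof -
    have "\<alpha>\<^sup>2 = Cf\<^sup>2 * \<rho> ^ 4" unfolding alpha by (simp add: power_mult_distrib power2_eq_square power4_eq_xxxx)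
    also have "\<dots> \<le> Cf\<^sup>2 * (1 / real K)" using r4 by (intro mult_left_mono) auto
    finally show ?thesis by simp
  qed
  have c2nn: "0 \<le> c2" unfolding c2_def using alpha_nn L_pos by simp
  have Efe0: "0 \<le> integral\<^sup>L M fe" unfolding fe_def by (intro integral_nonneg_AE) auto
  have Efee0: "0 \<le> integral\<^sup>L M fee" unfolding fee_def by (intro integral_nonneg_AE) auto
  have t1: "c2 * integral\<^sup>L M fe \<le> (2 * L * Cf / real K) * (a1 * EV + a2)"
    using c2b Efe c2nn Efe0 by (intro mult_mono) auto
  have t2: "\<alpha>\<^sup>2 * integral\<^sup>L M GG \<le> (Cf\<^sup>2 / real K) * (Cg * ((1 + a1 + a3) * EV + a2 + a4))"
  proof -
    have "integral\<^sup>L M GG \<le> Cg * (EV + (a1 * EV + a2) + (a3 * EV + a4))"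
      using EG Efe Efee Cg_nn by (smt (verit) mult_left_mono)
    also have "\<dots> = Cg * ((1 + a1 + a3) * EV + a2 + a4)" by (simp add: algebra_simps)
    finally have g: "integral\<^sup>L M GG \<le> Cg * ((1 + a1 + a3) * EV + a2 + a4)" .
    have "0 \<le> integral\<^sup>L M GG" using GG_nn by (intro integral_nonneg_AE) auto
    then show ?thesis using a2b g by (intro mult_mono) auto
  qed
  have "EV + c2 * integral\<^sup>L M fe + \<alpha>\<^sup>2 * integral\<^sup>L M GG
      \<le> EV + (2 * L * Cf / real K) * (a1 * EV + a2) + (Cf\<^sup>2 / real K) * (Cg * ((1 + a1 + a3) * EV + a2 + a4))"
    using t1 t2 by simp
  also have "\<dots> = (1 + Pc / real K) * EV + Qc / real K"
    unfolding Pc_def Qc_def using Kpos by (simp add: field_simps)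
  finally show "integral\<^sup>L M (Vk (Suc k)) + 2 * \<alpha> * c0 * \<rho> * integral\<^sup>L M (Obj k)
       \<le> (1 + Pc / real K) * integral\<^sup>L M (Vk k) + Qc / real K"
    using main unfolding EV_def by simp
qed

end

lemma recur_bound:
  fixes v u :: "nat \<Rightarrow> real" and K :: nat and P Q :: real
  assumes K: "1 \<le> K" and P: "0 \<le> P" and Q: "0 \<le> Q"
    and step: "\<And>k. k \<in> {1..K} \<Longrightarrow> v (Suc k) + u k \<le> (1 + P / real K) * v k + Q / real K"
    and vnn: "\<And>k. k \<in> {1..K+1} \<Longrightarrow> 0 \<le> v k"
    and unn: "\<And>k. k \<in> {1..K} \<Longrightarrow> 0 \<le> u k"
  shows "(\<Sum>k=1..K. u k) \<le> v 1 + P * (v 1 + Q) * exp P + Q"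
proof -
  define r where "r = 1 + P / real K"
  have Kp: "0 < real K" using K by simp
  have r1: "1 \<le> r" unfolding r_def using P Kp by simp
  have gen: "j \<le> K \<longrightarrow> v (Suc j) \<le> (v 1 + real j * Q / real K) * r ^ j" for j
  proof (induction j)
    case 0 then show ?case by simp
  next
    case (Suc j)
    show ?case
    proof
      assume jK: "Suc j \<le> K"
      then have IH: "v (Suc j) \<le> (v 1 + real j * Q / real K) * r ^ j" using Suc by simp
      have "v (Suc (Suc j)) \<le> r * v (Suc j) + Q / real K"
        using step[of "Suc j"] unn[of "Suc j"] jK unfolding r_def by simp
      also have "\<dots> \<le> r * ((v 1 + real j * Q / real K) * r ^ j) + Q / real K"
        using IH r1 by (intro add_right_mono mult_left_mono) auto
      also have "\<dots> \<le> r * ((v 1 + real j * Q / real K) * r ^ j) + Q / real K * r ^ Suc j"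
      proof -
        have "1 \<le> r ^ Suc j" using r1 by (rule one_le_power)
        then have "Q / real K * 1 \<le> Q / real K * r ^ Suc j" using Q Kp by (intro mult_left_mono) auto
        then show ?thesis by simp
      qed
      also have "\<dots> = (v 1 + real (Suc j) * Q / real K) * r ^ Suc j"
        by (simp add: algebra_simps add_divide_distrib)
      finally show "v (Suc (Suc j)) \<le> (v 1 + real (Suc j) * Q / real K) * r ^ Suc j" .
    qed
  qed
  have rK: "r ^ K \<le> exp P" unfolding r_def
    using exp_ge_one_plus_x_over_n_power_n[of K P] P K by simp
  have vb: "v k \<le> (v 1 + Q) * exp P" if k: "k \<in> {1..K}" for k
  proof -
    obtain j where j: "k = Suc j" "j \<le> K" using k by (cases k) auto
    have v1: "0 \<le> v 1" using vnn[of 1] K by simp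
    have "v k \<le> (v 1 + real j * Q / real K) * r ^ j" using gen[of j] j by simp
    also have "\<dots> \<le> (v 1 + Q) * r ^ K"
    proof (rule mult_mono)
      have "real j * Q \<le> real K * Q" using j Q by (intro mult_right_mono) auto
      then have "real j * Q / real K \<le> Q"
        using Kp by (simp add: divide_le_eq mult.commute)
      then show "v 1 + real j * Q / real K \<le> v 1 + Q" by simp
      show "r ^ j \<le> r ^ K" using r1 j by (intro power_increasing) auto
      show "0 \<le> v 1 + Q" using v1 Q by simp
      show "0 \<le> r ^ j" using r1 by simp
    qed
    also have "\<dots> \<le> (v 1 + Q) * exp P" using rK v1 Q by (intro mult_left_mono) auto
    finally show ?thesis .
  qed
  have tel: "(\<Sum>k=1..K. v k - v (Suc k)) = v 1 - v (Suc K)"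
  proof -
    have "(\<Sum>k=1..K. v k - v (Suc k)) = - (\<Sum>k=1..K. v (Suc k) - v k)"
      by (simp add: sum_negf[symmetric])
    also have "(\<Sum>k=1..K. v (Suc k) - v k) = v (Suc K) - v 1" using sum_Suc_diff[of 1 K v] K by simp
    finally show ?thesis by simp
  qed
  have A: "(\<Sum>k=1..K. u k) \<le> (\<Sum>k=1..K. (v k - v (Suc k)) + (P / real K * v k + Q / real K))"
  proof (rule sum_mono)
    fix k assume "k \<in> {1..K}"
    then show "u k \<le> (v k - v (Suc k)) + (P / real K * v k + Q / real K)"
      using step[of k] by (simp add: algebra_simps)
  qed
  have A2: "(\<Sum>k=1..K. (v k - v (Suc k)) + (P / real K * v k + Q / real K))
     = (\<Sum>k=1..K. v k - v (Suc k)) + (\<Sum>k=1..K. P / real K * v k + Q / real K)"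
    by (rule sum.distrib)
  have B: "(\<Sum>k=1..K. P / real K * v k + Q / real K) = P / real K * (\<Sum>k=1..K. v k) + Q"
    using Kp by (simp add: sum.distrib sum_distrib_left)
  have C: "P / real K * (\<Sum>k=1..K. v k) \<le> P / real K * (real K * ((v 1 + Q) * exp P))"
    using sum_bounded_above[of "{1..K}" v "(v 1 + Q) * exp P"] vb P Kp by (intro mult_left_mono) auto
  have D: "P / real K * (real K * ((v 1 + Q) * exp P)) = P * (v 1 + Q) * exp P" using Kp by simp
  have E: "0 \<le> v (Suc K)" using vnn[of "Suc K"] by simp
  show ?thesis using A A2 B C D E tel by linarith
qed


lemma rate_facts:
  fixes K :: nat and L :: real
  assumes K: "1 \<le> K" and L: "0 < L"
  defines "\<rho> \<equiv> min (real K powr (-1/4)) (1 / (2 * L))"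
  shows "0 < \<rho>" "\<rho> \<le> 1" "L * \<rho> \<le> 1/2" "\<rho> ^ 4 \<le> 1 / real K"
    "min 1 (1 / (8 * L ^ 3)) * real K powr (1/4) \<le> \<rho> ^ 3 * real K"
proof -
  define k where "k = real K"
  have k1: "1 \<le> k" unfolding k_def using K by simp
  have kp: "0 < k" using k1 by simp
  define p where "p = k powr (-1/4)"
  have pp: "0 < p" unfolding p_def using kp by simp
  have p1: "p \<le> 1"
  proof -
    have "k powr (-1/4) \<le> k powr 0" using k1 by (intro powr_mono) auto
    then show ?thesis unfolding p_def using kp by simp
  qed
  have rho_eq: "\<rho> = min p (1 / (2 * L))" unfolding \<rho>_def p_def k_def ..
  show r0: "0 < \<rho>" unfolding rho_eq using pp L by simp
  show "\<rho> \<le> 1" unfolding rho_eq using p1 by simp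
  have "L * \<rho> \<le> L * (1 / (2 * L))" unfolding rho_eq using L by (intro mult_left_mono) auto
  then show "L * \<rho> \<le> 1/2" using L by simp
  have p4: "p ^ 4 = 1 / k"
  proof -
    have "p ^ 4 = k powr (real 4 * (-1/4))" unfolding p_def using kp by (intro powr_power) auto
    also have "\<dots> = k powr (- 1)" by simp
    also have "\<dots> = 1 / k" using kp by (simp add: powr_minus divide_inverse)
    finally show ?thesis .
  qed
  have "\<rho> ^ 4 \<le> p ^ 4" unfolding rho_eq using r0[unfolded rho_eq] by (intro power_mono) auto
  then show "\<rho> ^ 4 \<le> 1 / real K" using p4 unfolding k_def by simp
  have p3: "p ^ 3 * k = k powr (1/4)"
  proof -
    have "p ^ 3 = k powr (real 3 * (-1/4))" unfolding p_def using kp by (intro powr_power) auto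
    then have h1: "p ^ 3 = k powr (-3/4)" by simp
    have h2: "k powr (-3/4) * k powr 1 = k powr (1/4)" by (subst powr_add[symmetric]) simp
    have h3: "k powr 1 = k" using kp by simp
    show ?thesis using h1 h2 h3 by simp
  qed
  define m where "m = min 1 (1 / (8 * L ^ 3))"
  have m1: "m \<le> 1" and m2: "m \<le> 1 / (8 * L ^ 3)" unfolding m_def by auto
  have kq: "0 \<le> k powr (1/4)" by simp
  show "min 1 (1 / (8 * L ^ 3)) * real K powr (1/4) \<le> \<rho> ^ 3 * real K"
    unfolding m_def[symmetric] k_def[symmetric]
  proof (cases "p \<le> 1 / (2 * L)")
    case True
    then have "\<rho> = p" unfolding rho_eq by simp
    then show "m * k powr (1/4) \<le> \<rho> ^ 3 * k" using p3 mult_right_mono[OF m1 kq] by simp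
  next
    case False
    then have r: "\<rho> = 1 / (2 * L)" unfolding rho_eq by simp
    have "\<rho> ^ 3 * k = (1 / (8 * L ^ 3)) * k" unfolding r by (simp add: power_divide power_mult_distrib)
    moreover have "k powr (1/4) \<le> k"
    proof -
      have "k powr (1/4) \<le> k powr 1" using k1 by (intro powr_mono) auto
      then show ?thesis using kp by simp
    qed
    moreover have "0 \<le> 1 / (8 * L ^ 3)" using L by simp
    ultimately have "(1 / (8 * L ^ 3)) * k powr (1/4) \<le> \<rho> ^ 3 * k"
      by (metis mult_left_mono)
    moreover have "m * k powr (1/4) \<le> (1 / (8 * L ^ 3)) * k powr (1/4)" by (rule mult_right_mono[OF m2 kq])
    ultimately show "m * k powr (1/4) \<le> \<rho> ^ 3 * k" by linarith
  qed
qed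

lemma final_arith:
  fixes K c m q S T :: real
  assumes "0 < K" "0 < c" "0 < m" "0 < q" "0 \<le> S" "S * c * (m * q) \<le> T * K"
  shows "(1 / K) * S \<le> T / (c * m) * (1 / q)"
proof -
  have "S * (c * m * q) \<le> T * K" using assms(6) by (simp add: algebra_simps)
  then have "S / K \<le> T / (c * m * q)" using assms(1-4)
    by (simp add: pos_divide_le_eq pos_le_divide_eq mult.commute mult.left_commute)
  then show ?thesis by simp
qed

context sps_setting
begin

definition Cfin :: "real \<Rightarrow> real \<Rightarrow> real \<Rightarrow> real \<Rightarrow> real \<Rightarrow> 'a \<Rightarrow> (nat \<Rightarrow> 'a) \<Rightarrow> real \<Rightarrow> real" where
  "Cfin Cf N1 N2 N3 N4 z1 w1 m =
    (let a1 = 2 * N2 * L\<^sup>2; a2 = N1 + 2 * N2 * (norm (B zs))\<^sup>2;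
         a3 = 2 * N4 * Kc\<^sup>2 * (1 + a1); a4 = N3 + N4 * (2 * Kc\<^sup>2 * a2 + 2 * (norm (B zs))\<^sup>2);
         P = 2 * L * Cf * a1 + Cf\<^sup>2 * Cg * (1 + a1 + a3); Q = 2 * L * Cf * a2 + Cf\<^sup>2 * Cg * (a2 + a4);
         v1 = Vf n zs ws z1 w1
     in (v1 + P * (v1 + Q) * exp P + Q) / (2 * c0 * Cf * m))"

end

context sps_prob
begin

lemma V_int: "k \<in> {1..K+1} \<Longrightarrow> integrable M (Vk k)"
proof (induction k)
  case 0 then show ?case by simp
next
  case (Suc k)
  show ?case
  proof (cases "k = 0")
    case True
    have "Vk (Suc k) = (\<lambda>\<omega>. Vf n zs ws z1 w1)" unfolding True Vk_def
      by (simp add: sps_z_def sps_w_def state_1')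
    then show ?thesis by simp
  next
    case False
    then have k: "k \<in> {1..K}" using Suc.prems by simp
    then have "integrable M (Vk k)" using Suc.IH by simp
    then show ?thesis by (rule one_step(1)[OF k])
  qed
qed

lemma V1_eq: "integral\<^sup>L M (Vk 1) = Vf n zs ws z1 w1"
proof -
  have "Vk 1 = (\<lambda>\<omega>. Vf n zs ws z1 w1)" unfolding Vk_def by (simp add: sps_z_def sps_w_def state_1 state_1')
  then show ?thesis by (simp add: int_const)
qed

lemma sum_bound:
  "(\<Sum>k=1..K. integral\<^sup>L M (Obj k)) * (2 * Cf * c0 * \<rho> ^ 3)
     \<le> Vf n zs ws z1 w1 + Pc * (Vf n zs ws z1 w1 + Qc) * exp Pc + Qc"
proof -
  define v where "v = (\<lambda>k. integral\<^sup>L M (Vk k))"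
  define u where "u = (\<lambda>k. 2 * \<alpha> * c0 * \<rho> * integral\<^sup>L M (Obj k))"
  have "(\<Sum>k=1..K. u k) \<le> v 1 + Pc * (v 1 + Qc) * exp Pc + Qc"
  proof (rule recur_bound[OF K1 PQ_nn])
    fix k assume k: "k \<in> {1..K}"
    have "integrable M (Vk k)" using V_int k by simp
    then show "v (Suc k) + u k \<le> (1 + Pc / real K) * v k + Qc / real K"
      unfolding u_def v_def using one_step(3)[OF k] by simp
  next
    fix k assume "k \<in> {1..K+1}"
    show "0 \<le> v k" unfolding v_def using Vk_nn by (intro integral_nonneg_AE) auto
  next
    fix k assume "k \<in> {1..K}"
    have "0 \<le> integral\<^sup>L M (Obj k)" unfolding Obj_def Of_def
      by (intro integral_nonneg_AE AE_I2 add_nonneg_nonneg sum_nonneg) auto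
    then show "0 \<le> u k" unfolding u_def using alpha_nn c0_pos rho by simp
  qed
  moreover have "(\<Sum>k=1..K. u k) = (\<Sum>k=1..K. integral\<^sup>L M (Obj k) * (2 * Cf * c0 * \<rho> ^ 3))"
    by (intro sum.cong refl) (simp add: u_def alpha power2_eq_square power3_eq_cube algebra_simps)
  moreover have "(\<Sum>k=1..K. integral\<^sup>L M (Obj k) * (2 * Cf * c0 * \<rho> ^ 3)) = (\<Sum>k=1..K. integral\<^sup>L M (Obj k)) * (2 * Cf * c0 * \<rho> ^ 3)"
    by (rule sum_distrib_right[symmetric])
  ultimately show ?thesis unfolding v_def V1_eq by simp
qed

lemma sO_eq: "sps_O n A B \<tau> \<rho> \<alpha> z1 w1 \<epsilon> e j = Obj j"
  unfolding sps_O_def Obj_def Of_def Let_def ..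

lemma final_locale:
  assumes m: "0 < m" and rate: "m * real K powr (1/4) \<le> \<rho> ^ 3 * real K"
  shows "ennreal (1 / real K) * (\<Sum>j=1..K. \<integral>\<^sup>+ \<omega>. ennreal (sps_O n A B \<tau> \<rho> \<alpha> z1 w1 \<epsilon> e j \<omega>) \<partial>M)
     \<le> ennreal (Cfin Cf N1 N2 N3 N4 z1 w1 m * real K powr (-1/4))"
proof -
  have Kp: "0 < real K" using K1 by simp
  have Onn: "\<And>j \<omega>. 0 \<le> Obj j \<omega>" unfolding Obj_def Of_def by (intro add_nonneg_nonneg sum_nonneg) auto
  have Oi: "j \<in> {1..K} \<Longrightarrow> integrable M (Obj j)" for j using one_step(2) V_int by simp
  have nn: "j \<in> {1..K} \<Longrightarrow> (\<integral>\<^sup>+ \<omega>. ennreal (Obj j \<omega>) \<partial>M) = ennreal (integral\<^sup>L M (Obj j))" for j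
    using Oi Onn by (intro nn_integral_eq_integral) auto
  have EOnn: "\<And>j. 0 \<le> integral\<^sup>L M (Obj j)" using Onn by (intro integral_nonneg_AE) auto
  define S where "S = (\<Sum>j=1..K. integral\<^sup>L M (Obj j))"
  have S0: "0 \<le> S" unfolding S_def using EOnn by (intro sum_nonneg) auto
  have "(\<Sum>j=1..K. \<integral>\<^sup>+ \<omega>. ennreal (sps_O n A B \<tau> \<rho> \<alpha> z1 w1 \<epsilon> e j \<omega>) \<partial>M) = (\<Sum>j=1..K. ennreal (integral\<^sup>L M (Obj j)))"
    unfolding sO_eq using nn by (intro sum.cong) auto
  also have "\<dots> = ennreal S" unfolding S_def using EOnn by simp
  finally have eq: "(\<Sum>j=1..K. \<integral>\<^sup>+ \<omega>. ennreal (sps_O n A B \<tau> \<rho> \<alpha> z1 w1 \<epsilon> e j \<omega>) \<partial>M) = ennreal S" .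
  define T where "T = Vf n zs ws z1 w1 + Pc * (Vf n zs ws z1 w1 + Qc) * exp Pc + Qc"
  have Cfin_eq: "Cfin Cf N1 N2 N3 N4 z1 w1 m = T / (2 * c0 * Cf * m)"
    unfolding Cfin_def T_def Pc_def Qc_def a1_def a2_def a3_def a4_def Let_def ..
  have sb: "S * (2 * Cf * c0 * \<rho> ^ 3) \<le> T" unfolding S_def T_def by (rule sum_bound)
  have cpos: "0 < 2 * c0 * Cf" using Cf c0_pos by simp
  have kq: "0 < real K powr (1/4)" using Kp by simp
  have "(1 / real K) * S \<le> T / (2 * c0 * Cf * m) * real K powr (-1/4)"
  proof -
    have "S * (2 * c0 * Cf) * (m * real K powr (1/4)) \<le> S * (2 * c0 * Cf) * (\<rho> ^ 3 * real K)"
      using rate S0 cpos by (intro mult_left_mono) auto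
    also have "\<dots> = S * (2 * Cf * c0 * \<rho> ^ 3) * real K" by (simp add: algebra_simps)
    also have "\<dots> \<le> T * real K" using sb Kp by (intro mult_right_mono) auto
    finally have h: "S * (2 * c0 * Cf) * (m * real K powr (1/4)) \<le> T * real K" .
    have m4: "(-1/4::real) = - (1/4)" by simp
    have "real K powr (-1/4) = inverse (real K powr (1/4))" unfolding m4 by (rule powr_minus)
    then have pm: "real K powr (-1/4) = 1 / real K powr (1/4)" by (simp add: inverse_eq_divide)
    show ?thesis unfolding pm by (rule final_arith[OF Kp cpos m kq S0 h])
  qed
  then have "ennreal ((1 / real K) * S) \<le> ennreal (Cfin Cf N1 N2 N3 N4 z1 w1 m * real K powr (-1/4))"
    unfolding Cfin_eq by (rule ennreal_leI)
  moreover have "ennreal ((1 / real K) * S) = ennreal (1 / real K) * ennreal S"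
    using S0 Kp by (intro ennreal_mult) auto
  ultimately show ?thesis unfolding eq by simp
qed

end

theorem theorem2:
  fixes n :: nat and A :: "nat \<Rightarrow> 'a::euclidean_space \<Rightarrow> 'a set" and B :: "'a \<Rightarrow> 'a"
    and L \<tau> Cf N1 N2 N3 N4 :: real and z1 :: 'a and w1 :: "nat \<Rightarrow> 'a"
  assumes n: "1 \<le> n"
    and A_mm: "\<forall>i\<in>{1..n}. maximal_monotone (A i)"
    and B_mono: "monotone_fun B" and L_pos: "0 < L" and B_lip: "L-lipschitz_on UNIV B"
    and sol: "\<exists>z a. (\<forall>i\<in>{1..n}. a i \<in> A i z) \<and> (\<Sum>i=1..n. a i) + B z = 0"
    and tau: "0 < \<tau>" and Cf: "0 < Cf"
    and N: "0 \<le> N1" "0 \<le> N2" "0 \<le> N3" "0 \<le> N4"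
    and w1_sum: "(\<Sum>i=1..n+1. w1 i) = 0"
  shows "\<exists>C. \<forall>K::nat. 1 \<le> K \<longrightarrow>
    (let \<rho> = min (real K powr (-1/4)) (1 / (2 * L)); \<alpha> = Cf * \<rho>\<^sup>2 in
     \<forall>(M :: 'm measure) (\<epsilon> :: nat \<Rightarrow> 'm \<Rightarrow> 'a) (e :: nat \<Rightarrow> 'm \<Rightarrow> 'a).
       prob_space M \<and>
       (\<forall>k\<in>{1..K}.
          \<epsilon> k \<in> borel_measurable M \<and> e k \<in> borel_measurable M \<and>
          integrable M (\<epsilon> k) \<and> integrable M (e k) \<and>
          (\<forall>b\<in>Basis. AE \<omega> in M.
             real_cond_exp M (sps_F M n A B \<tau> \<rho> \<alpha> z1 w1 \<epsilon> e k) (\<lambda>\<omega>. \<epsilon> k \<omega> \<bullet> b) \<omega> = 0) \<and>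
          (\<forall>b\<in>Basis. AE \<omega> in M.
             real_cond_exp M (sps_F M n A B \<tau> \<rho> \<alpha> z1 w1 \<epsilon> e k) (\<lambda>\<omega>. e k \<omega> \<bullet> b) \<omega> = 0) \<and>
          (AE \<omega> in M.
             nn_cond_exp M (sps_F M n A B \<tau> \<rho> \<alpha> z1 w1 \<epsilon> e k)
               (\<lambda>\<omega>. ennreal ((norm (\<epsilon> k \<omega>))\<^sup>2)) \<omega>
             \<le> ennreal (N1 + N2 * (norm (B (sps_z n A B \<tau> \<rho> \<alpha> z1 w1 \<epsilon> e k \<omega>)))\<^sup>2)) \<and>
          (AE \<omega> in M.
             nn_cond_exp M (sps_FE M n A B \<tau> \<rho> \<alpha> z1 w1 \<epsilon> e k)
               (\<lambda>\<omega>. ennreal ((norm (e k \<omega>))\<^sup>2)) \<omega>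
             \<le> ennreal (N3 + N4 * (norm (B (sps_x n A B \<tau> \<rho>
                   (sps_z n A B \<tau> \<rho> \<alpha> z1 w1 \<epsilon> e k \<omega>) (sps_w n A B \<tau> \<rho> \<alpha> z1 w1 \<epsilon> e k \<omega>)
                   (\<epsilon> k \<omega>) (n + 1))))\<^sup>2)))
       \<longrightarrow> ennreal (1 / real K) * (\<Sum>j=1..K. \<integral>\<^sup>+ \<omega>. ennreal (sps_O n A B \<tau> \<rho> \<alpha> z1 w1 \<epsilon> e j \<omega>) \<partial>M)
           \<le> ennreal (C * real K powr (-1/4)))"
proof -
  obtain zs a where a: "\<forall>i\<in>{1..n}. a i \<in> A i zs" and s: "(\<Sum>i=1..n. a i) + B zs = 0"
    using sol by blast
  define ws where "ws = (\<lambda>i. if i \<le> n then a i else B zs)"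
  have wsA: "\<forall>i\<in>{1..n}. ws i \<in> A i zs" using a unfolding ws_def by auto
  have wsB: "ws (n+1) = B zs" unfolding ws_def by simp
  have wss: "(\<Sum>i=1..n+1. ws i) = 0"
  proof -
    have "(\<Sum>i=1..n. ws i) = (\<Sum>i=1..n. a i)" unfolding ws_def by (intro sum.cong) auto
    then show ?thesis using s wsB by simp
  qed
  interpret S: sps_setting n A B \<tau> L zs ws
    by (unfold_locales; (rule A_mm B_mono L_pos B_lip tau wsA wsB wss)?)
  define m where "m = min 1 (1 / (8 * L ^ 3))"
  have mpos: "0 < m" unfolding m_def using L_pos by simp
  show ?thesis
  proof (intro exI[of _ "S.Cfin Cf N1 N2 N3 N4 z1 w1 m"] allI impI)
    fix K :: nat assume K: "1 \<le> K"
    define \<rho> where "\<rho> = min (real K powr (-1/4)) (1 / (2 * L))"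
    note rf = rate_facts[OF K L_pos, folded \<rho>_def]
    show "let \<rho> = min (real K powr (-1/4)) (1 / (2 * L)); \<alpha> = Cf * \<rho>\<^sup>2 in
     \<forall>(M :: 'm measure) (\<epsilon> :: nat \<Rightarrow> 'm \<Rightarrow> 'a) (e :: nat \<Rightarrow> 'm \<Rightarrow> 'a).
       prob_space M \<and>
       (\<forall>k\<in>{1..K}.
          \<epsilon> k \<in> borel_measurable M \<and> e k \<in> borel_measurable M \<and>
          integrable M (\<epsilon> k) \<and> integrable M (e k) \<and>
          (\<forall>b\<in>Basis. AE \<omega> in M.
             real_cond_exp M (sps_F M n A B \<tau> \<rho> \<alpha> z1 w1 \<epsilon> e k) (\<lambda>\<omega>. \<epsilon> k \<omega> \<bullet> b) \<omega> = 0) \<and>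
          (\<forall>b\<in>Basis. AE \<omega> in M.
             real_cond_exp M (sps_F M n A B \<tau> \<rho> \<alpha> z1 w1 \<epsilon> e k) (\<lambda>\<omega>. e k \<omega> \<bullet> b) \<omega> = 0) \<and>
          (AE \<omega> in M.
             nn_cond_exp M (sps_F M n A B \<tau> \<rho> \<alpha> z1 w1 \<epsilon> e k)
               (\<lambda>\<omega>. ennreal ((norm (\<epsilon> k \<omega>))\<^sup>2)) \<omega>
             \<le> ennreal (N1 + N2 * (norm (B (sps_z n A B \<tau> \<rho> \<alpha> z1 w1 \<epsilon> e k \<omega>)))\<^sup>2)) \<and>
          (AE \<omega> in M.
             nn_cond_exp M (sps_FE M n A B \<tau> \<rho> \<alpha> z1 w1 \<epsilon> e k)
               (\<lambda>\<omega>. ennreal ((norm (e k \<omega>))\<^sup>2)) \<omega>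
             \<le> ennreal (N3 + N4 * (norm (B (sps_x n A B \<tau> \<rho>
                   (sps_z n A B \<tau> \<rho> \<alpha> z1 w1 \<epsilon> e k \<omega>) (sps_w n A B \<tau> \<rho> \<alpha> z1 w1 \<epsilon> e k \<omega>)
                   (\<epsilon> k \<omega>) (n + 1))))\<^sup>2)))
       \<longrightarrow> ennreal (1 / real K) * (\<Sum>j=1..K. \<integral>\<^sup>+ \<omega>. ennreal (sps_O n A B \<tau> \<rho> \<alpha> z1 w1 \<epsilon> e j \<omega>) \<partial>M)
           \<le> ennreal (S.Cfin Cf N1 N2 N3 N4 z1 w1 m * real K powr (-1/4))"
      unfolding Let_def \<rho>_def[symmetric]
    proof (intro allI impI)
      fix M :: "'m measure" and \<epsilon> e :: "nat \<Rightarrow> 'm \<Rightarrow> 'a"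
      assume H: "prob_space M \<and>
       (\<forall>k\<in>{1..K}.
          \<epsilon> k \<in> borel_measurable M \<and> e k \<in> borel_measurable M \<and>
          integrable M (\<epsilon> k) \<and> integrable M (e k) \<and>
          (\<forall>b\<in>Basis. AE \<omega> in M.
             real_cond_exp M (sps_F M n A B \<tau> \<rho> (Cf * \<rho>\<^sup>2) z1 w1 \<epsilon> e k) (\<lambda>\<omega>. \<epsilon> k \<omega> \<bullet> b) \<omega> = 0) \<and>
          (\<forall>b\<in>Basis. AE \<omega> in M.
             real_cond_exp M (sps_F M n A B \<tau> \<rho> (Cf * \<rho>\<^sup>2) z1 w1 \<epsilon> e k) (\<lambda>\<omega>. e k \<omega> \<bullet> b) \<omega> = 0) \<and>
          (AE \<omega> in M.
             nn_cond_exp M (sps_F M n A B \<tau> \<rho> (Cf * \<rho>\<^sup>2) z1 w1 \<epsilon> e k)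
               (\<lambda>\<omega>. ennreal ((norm (\<epsilon> k \<omega>))\<^sup>2)) \<omega>
             \<le> ennreal (N1 + N2 * (norm (B (sps_z n A B \<tau> \<rho> (Cf * \<rho>\<^sup>2) z1 w1 \<epsilon> e k \<omega>)))\<^sup>2)) \<and>
          (AE \<omega> in M.
             nn_cond_exp M (sps_FE M n A B \<tau> \<rho> (Cf * \<rho>\<^sup>2) z1 w1 \<epsilon> e k)
               (\<lambda>\<omega>. ennreal ((norm (e k \<omega>))\<^sup>2)) \<omega>
             \<le> ennreal (N3 + N4 * (norm (B (sps_x n A B \<tau> \<rho>
                   (sps_z n A B \<tau> \<rho> (Cf * \<rho>\<^sup>2) z1 w1 \<epsilon> e k \<omega>) (sps_w n A B \<tau> \<rho> (Cf * \<rho>\<^sup>2) z1 w1 \<epsilon> e k \<omega>)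
                   (\<epsilon> k \<omega>) (n + 1))))\<^sup>2)))"
      note Hp = conjunct1[OF H] and Hh = conjunct2[OF H]
      interpret P: sps_prob n A B \<tau> L zs ws M \<epsilon> e K \<rho> "Cf * \<rho>\<^sup>2" Cf N1 N2 N3 N4 z1 w1
        by (rule sps_prob.intro[OF S.sps_setting_axioms sps_prob_axioms.intro[OF Hp K rf(1-4) refl Cf N w1_sum Hh]])
      show "ennreal (1 / real K) * (\<Sum>j=1..K. \<integral>\<^sup>+ \<omega>. ennreal (sps_O n A B \<tau> \<rho> (Cf * \<rho>\<^sup>2) z1 w1 \<epsilon> e j \<omega>) \<partial>M)
           \<le> ennreal (S.Cfin Cf N1 N2 N3 N4 z1 w1 m * real K powr (-1/4))"
        by (rule P.final_locale[OF mpos rf(5)[folded m_def]])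
    qed
  qed
qed

end
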